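(* Let $X$ be a separable symmetric space on $[0,1]$. Then the following are equivalent: (a) for every $f\in X$ with $\int_0^1f(t)\,dt\ne0$ there exists $\lambda_0\in\mathbb{R}$ with $\|1-\lambda_0f\|_X<1$; (b) $X$ is smooth at the function identically equal to $1$.
   Context: A symmetric space $X$ on $[0,1]$ is a Banach space of (equivalence classes of) real-valued Lebesgue measurable functions on $[0,1]$ such that: (a) if $y\in X$ and $x$ is measurable with $|x|\le|y|$ a.e., then $x\in X$ and $\|x\|_X\le\|y\|_X$; (b) if $x,y$ are equimeasurable and $y\in X$, then $x\in X$ and $\|x\|_X=\|y\|_X$; normalized so that $\|\chi_{[0,1]}\|_X=1$. A Banach space $E$ is smooth at $x_0\in E$ with $\|x_0\|_E=1$ if there is a unique $x^*\in E^*$ with $\|x^*\|_{E^*}=x^*(x_0)=1$. *)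

theory Defs
  imports "HOL-Analysis.Analysis"
begin

text \<open>Functions on [0,1] are represented by functions real => real; only their
values on [0,1] (up to Lebesgue-null sets) matter.\<close>

abbreviation M01 :: "real measure" where "M01 \<equiv> lebesgue_on {0..1}"

definition equimeasurable :: "(real \<Rightarrow> real) \<Rightarrow> (real \<Rightarrow> real) \<Rightarrow> bool" where
  "equimeasurable x y \<longleftrightarrow>
     (\<forall>s::real. emeasure M01 {t \<in> space M01. x t > s} = emeasure M01 {t \<in> space M01. y t > s})"

definition symmetric_space :: "(real \<Rightarrow> real) set \<Rightarrow> ((real \<Rightarrow> real) \<Rightarrow> real) \<Rightarrow> bool" where
  "symmetric_space X N \<longleftrightarrow>
     \<comment> \<open>elements are Lebesgue measurable on [0,1]\<close>
     X \<subseteq> borel_measurable M01 \<and>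
     \<comment> \<open>linear space\<close>
     (\<lambda>_. 0) \<in> X \<and>
     (\<forall>x\<in>X. \<forall>y\<in>X. (\<lambda>t. x t + y t) \<in> X) \<and>
     (\<forall>x\<in>X. \<forall>c::real. (\<lambda>t. c * x t) \<in> X) \<and>
     \<comment> \<open>norm (on equivalence classes modulo a.e. equality)\<close>
     (\<forall>x\<in>X. N x \<ge> 0) \<and>
     (\<forall>x\<in>X. N x = 0 \<longleftrightarrow> (AE t in M01. x t = 0)) \<and>
     (\<forall>x\<in>X. \<forall>c::real. N (\<lambda>t. c * x t) = \<bar>c\<bar> * N x) \<and>
     (\<forall>x\<in>X. \<forall>y\<in>X. N (\<lambda>t. x t + y t) \<le> N x + N y) \<and>
     \<comment> \<open>completeness (Banach space)\<close>
     (\<forall>u::nat \<Rightarrow> real \<Rightarrow> real. (\<forall>n. u n \<in> X) \<and>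
        (\<forall>e>0. \<exists>K. \<forall>m\<ge>K. \<forall>n\<ge>K. N (\<lambda>t. u m t - u n t) < e) \<longrightarrow>
        (\<exists>x\<in>X. (\<lambda>n. N (\<lambda>t. u n t - x t)) \<longlonglongrightarrow> 0)) \<and>
     \<comment> \<open>(a) ideal property\<close>
     (\<forall>x y. y \<in> X \<and> x \<in> borel_measurable M01 \<and> (AE t in M01. \<bar>x t\<bar> \<le> \<bar>y t\<bar>)
        \<longrightarrow> x \<in> X \<and> N x \<le> N y) \<and>
     \<comment> \<open>(b) rearrangement invariance\<close>
     (\<forall>x y. y \<in> X \<and> x \<in> borel_measurable M01 \<and> equimeasurable x y
        \<longrightarrow> x \<in> X \<and> N x = N y) \<and>
     \<comment> \<open>normalisation: the characteristic function of [0,1]\<close>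
     (\<lambda>_. 1) \<in> X \<and> N (\<lambda>_. 1) = 1"

definition separable_space :: "(real \<Rightarrow> real) set \<Rightarrow> ((real \<Rightarrow> real) \<Rightarrow> real) \<Rightarrow> bool" where
  "separable_space X N \<longleftrightarrow>
     (\<exists>D. countable D \<and> D \<subseteq> X \<and> (\<forall>x\<in>X. \<forall>e>0. \<exists>d\<in>D. N (\<lambda>t. x t - d t) < e))"

definition bounded_functional ::
    "(real \<Rightarrow> real) set \<Rightarrow> ((real \<Rightarrow> real) \<Rightarrow> real) \<Rightarrow> ((real \<Rightarrow> real) \<Rightarrow> real) \<Rightarrow> bool" where
  "bounded_functional X N \<phi> \<longleftrightarrow>
     (\<forall>x\<in>X. \<forall>y\<in>X. \<phi> (\<lambda>t. x t + y t) = \<phi> x + \<phi> y) \<and>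
     (\<forall>x\<in>X. \<forall>c::real. \<phi> (\<lambda>t. c * x t) = c * \<phi> x) \<and>
     (\<exists>C. \<forall>x\<in>X. \<bar>\<phi> x\<bar> \<le> C * N x)"

definition dual_norm ::
    "(real \<Rightarrow> real) set \<Rightarrow> ((real \<Rightarrow> real) \<Rightarrow> real) \<Rightarrow> ((real \<Rightarrow> real) \<Rightarrow> real) \<Rightarrow> real" where
  "dual_norm X N \<phi> = Sup {\<bar>\<phi> x\<bar> | x. x \<in> X \<and> N x \<le> 1}"

text \<open>Smoothness at x0: exactly one norming functional (functionals being
identified when they agree on X).\<close>
definition smooth_at ::
    "(real \<Rightarrow> real) set \<Rightarrow> ((real \<Rightarrow> real) \<Rightarrow> real) \<Rightarrow> (real \<Rightarrow> real) \<Rightarrow> bool" where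
  "smooth_at X N x0 \<longleftrightarrow> x0 \<in> X \<and> N x0 = 1 \<and>
     (\<exists>\<phi>. bounded_functional X N \<phi> \<and> dual_norm X N \<phi> = 1 \<and> \<phi> x0 = 1) \<and>
     (\<forall>\<phi> \<psi>. bounded_functional X N \<phi> \<and> dual_norm X N \<phi> = 1 \<and> \<phi> x0 = 1 \<and>
             bounded_functional X N \<psi> \<and> dual_norm X N \<psi> = 1 \<and> \<psi> x0 = 1
             \<longrightarrow> (\<forall>x\<in>X. \<phi> x = \<psi> x))"

end

theory Submission
  imports Defs
begin

lemma ss_basic:
  assumes "symmetric_space X N"
  shows ss_meas: "\<And>x. x \<in> X \<Longrightarrow> x \<in> borel_measurable M01"
    and ss_zero: "(\<lambda>_. 0) \<in> X"
    and ss_add: "\<And>x y. x \<in> X \<Longrightarrow> y \<in> X \<Longrightarrow> (\<lambda>t. x t + y t) \<in> X"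
    and ss_smult: "\<And>x c. x \<in> X \<Longrightarrow> (\<lambda>t. c * x t) \<in> X"
    and ss_nonneg: "\<And>x. x \<in> X \<Longrightarrow> N x \<ge> 0"
    and ss_N0: "\<And>x. x \<in> X \<Longrightarrow> N x = 0 \<longleftrightarrow> (AE t in M01. x t = 0)"
    and ss_Nsmult: "\<And>x c. x \<in> X \<Longrightarrow> N (\<lambda>t. c * x t) = \<bar>c\<bar> * N x"
    and ss_tri: "\<And>x y. x \<in> X \<Longrightarrow> y \<in> X \<Longrightarrow> N (\<lambda>t. x t + y t) \<le> N x + N y"
    and ss_ideal: "\<And>x y. y \<in> X \<Longrightarrow> x \<in> borel_measurable M01 \<Longrightarrow> (AE t in M01. \<bar>x t\<bar> \<le> \<bar>y t\<bar>) \<Longrightarrow> x \<in> X \<and> N x \<le> N y"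
    and ss_ri: "\<And>x y. y \<in> X \<Longrightarrow> x \<in> borel_measurable M01 \<Longrightarrow> equimeasurable x y \<Longrightarrow> x \<in> X \<and> N x = N y"
    and ss_one: "(\<lambda>_. 1) \<in> X" and ss_None: "N (\<lambda>_. 1) = 1"
proof -
  note h = assms[unfolded symmetric_space_def]
  note c1 = h[THEN conjunct1] and r1 = h[THEN conjunct2]
  note c2 = r1[THEN conjunct1] and r2 = r1[THEN conjunct2]
  note c3 = r2[THEN conjunct1] and r3 = r2[THEN conjunct2]
  note c4 = r3[THEN conjunct1] and r4 = r3[THEN conjunct2]
  note c5 = r4[THEN conjunct1] and r5 = r4[THEN conjunct2]
  note c6 = r5[THEN conjunct1] and r6 = r5[THEN conjunct2]
  note c7 = r6[THEN conjunct1] and r7 = r6[THEN conjunct2]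
  note c8 = r7[THEN conjunct1] and r8 = r7[THEN conjunct2]
  note c9 = r8[THEN conjunct1] and r9 = r8[THEN conjunct2]
  note c10 = r9[THEN conjunct1] and r10 = r9[THEN conjunct2]
  note c11 = r10[THEN conjunct1] and r11 = r10[THEN conjunct2]
  note c12 = r11[THEN conjunct1] and c13 = r11[THEN conjunct2]
  show "\<And>x. x \<in> X \<Longrightarrow> x \<in> borel_measurable M01" using c1 by (rule subsetD)
  show "(\<lambda>_. 0) \<in> X" by (rule c2)
  show "\<And>x y. x \<in> X \<Longrightarrow> y \<in> X \<Longrightarrow> (\<lambda>t. x t + y t) \<in> X" using c3 by blast
  show "\<And>x c. x \<in> X \<Longrightarrow> (\<lambda>t. c * x t) \<in> X" using c4 by blast
  show "\<And>x. x \<in> X \<Longrightarrow> N x \<ge> 0" using c5 by blast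
  show "\<And>x. x \<in> X \<Longrightarrow> N x = 0 \<longleftrightarrow> (AE t in M01. x t = 0)" using c6 by blast
  show "\<And>x c. x \<in> X \<Longrightarrow> N (\<lambda>t. c * x t) = \<bar>c\<bar> * N x" using c7 by blast
  show "\<And>x y. x \<in> X \<Longrightarrow> y \<in> X \<Longrightarrow> N (\<lambda>t. x t + y t) \<le> N x + N y" using c8 by blast
  show "\<And>x y. y \<in> X \<Longrightarrow> x \<in> borel_measurable M01 \<Longrightarrow> (AE t in M01. \<bar>x t\<bar> \<le> \<bar>y t\<bar>) \<Longrightarrow> x \<in> X \<and> N x \<le> N y" using c10 by blast
  show "\<And>x y. y \<in> X \<Longrightarrow> x \<in> borel_measurable M01 \<Longrightarrow> equimeasurable x y \<Longrightarrow> x \<in> X \<and> N x = N y" using c11 by blast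
  show "(\<lambda>_. 1) \<in> X" by (rule c12)
  show "N (\<lambda>_. 1) = 1" by (rule c13)
qed


lemma ss_neg: assumes "symmetric_space X N" "x \<in> X" shows "(\<lambda>t. - x t) \<in> X"
proof -
  have "(\<lambda>t. (-1) * x t) \<in> X" by (rule ss_smult[OF assms(1,2)])
  then show ?thesis by simp
qed

lemma ss_diff: assumes "symmetric_space X N" "x \<in> X" "y \<in> X" shows "(\<lambda>t. x t - y t) \<in> X"
proof -
  have "(\<lambda>t. x t + - y t) \<in> X" by (rule ss_add[OF assms(1,2) ss_neg[OF assms(1,3)]])
  then show ?thesis by simp
qed

lemma ss_Nneg: assumes "symmetric_space X N" "x \<in> X" shows "N (\<lambda>t. - x t) = N x"
proof -
  have "N (\<lambda>t. (-1) * x t) = \<bar>-1\<bar> * N x" by (rule ss_Nsmult[OF assms(1,2)])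
  then show ?thesis by simp
qed

lemma ss_Ndiff_sym: assumes "symmetric_space X N" "x \<in> X" "y \<in> X"
  shows "N (\<lambda>t. y t - x t) = N (\<lambda>t. x t - y t)"
proof -
  have "N (\<lambda>t. - (x t - y t)) = N (\<lambda>t. x t - y t)" by (rule ss_Nneg[OF assms(1) ss_diff[OF assms]])
  then show ?thesis by simp
qed

lemma ss_AE_eq: assumes "symmetric_space X N" "x \<in> X" "y \<in> borel_measurable M01"
  "AE t in M01. x t = y t"
  shows "y \<in> X \<and> N y = N x"
proof -
  have a1: "AE t in M01. \<bar>y t\<bar> \<le> \<bar>x t\<bar>" using assms(4) by (rule AE_mp) auto
  have 1: "y \<in> X \<and> N y \<le> N x" by (rule ss_ideal[OF assms(1,2,3) a1])
  have a2: "AE t in M01. \<bar>x t\<bar> \<le> \<bar>y t\<bar>" using assms(4) by (rule AE_mp) auto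
  have "N x \<le> N y" using ss_ideal[OF assms(1) conjunct1[OF 1] ss_meas[OF assms(1,2)] a2] by simp
  with 1 show ?thesis by auto
qed

lemma ss_const: assumes "symmetric_space X N" shows "(\<lambda>_. c) \<in> X \<and> N (\<lambda>_. c) = \<bar>c\<bar>"
proof -
  have "(\<lambda>t. c * 1) \<in> X" by (rule ss_smult[OF assms ss_one[OF assms]])
  moreover have "N (\<lambda>t. c * 1) = \<bar>c\<bar> * N (\<lambda>_. 1)" by (rule ss_Nsmult[OF assms ss_one[OF assms]])
  ultimately show ?thesis using ss_None[OF assms] by simp
qed

lemma ss_N_zero: assumes "symmetric_space X N" shows "N (\<lambda>_. 0) = 0"
  using ss_const[OF assms, of 0] by simp

lemma ss_sum: fixes n :: nat assumes "symmetric_space X N" "\<And>k. k < n \<Longrightarrow> f k \<in> X"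
  shows "(\<lambda>t. \<Sum>k<n. f k t) \<in> X \<and> N (\<lambda>t. \<Sum>k<n. f k t) \<le> (\<Sum>k<n. N (f k))"
  using assms(2)
proof (induction n)
  case 0
  then show ?case using ss_zero[OF assms(1)] ss_N_zero[OF assms(1)] by simp
next
  case (Suc n)
  then have IH: "(\<lambda>t. \<Sum>k<n. f k t) \<in> X" "N (\<lambda>t. \<Sum>k<n. f k t) \<le> (\<Sum>k<n. N (f k))" by auto
  have fn: "f n \<in> X" using Suc by auto
  show ?case using ss_add[OF assms(1) IH(1) fn] ss_tri[OF assms(1) IH(1) fn] IH(2) by simp
qed

definition subl :: "(real \<Rightarrow> real) set \<Rightarrow> ((real \<Rightarrow> real) \<Rightarrow> real) \<Rightarrow> ((real \<Rightarrow> real) \<Rightarrow> real) \<Rightarrow> bool" where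
  "subl X N p \<longleftrightarrow> (\<forall>x\<in>X. \<forall>y\<in>X. p (\<lambda>t. x t + y t) \<le> p x + p y) \<and>
     (\<forall>x\<in>X. \<forall>c\<ge>0. p (\<lambda>t. c * x t) = c * p x) \<and> (\<forall>x\<in>X. p x \<le> N x)"

lemma subl_add: "subl X N p \<Longrightarrow> x \<in> X \<Longrightarrow> y \<in> X \<Longrightarrow> p (\<lambda>t. x t + y t) \<le> p x + p y"
  unfolding subl_def by blast
lemma subl_hom: "subl X N p \<Longrightarrow> x \<in> X \<Longrightarrow> c \<ge> 0 \<Longrightarrow> p (\<lambda>t. c * x t) = c * p x"
  unfolding subl_def by blast
lemma subl_N: "subl X N p \<Longrightarrow> x \<in> X \<Longrightarrow> p x \<le> N x"
  unfolding subl_def by blast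

lemma subl_zero: assumes "symmetric_space X N" "subl X N p" shows "p (\<lambda>_. 0) = 0"
proof -
  have "p (\<lambda>t. 0 * (\<lambda>_. 0) t) = 0 * p (\<lambda>_. 0)" by (rule subl_hom[OF assms(2) ss_zero[OF assms(1)]]) simp
  then show ?thesis by simp
qed

lemma subl_low: assumes "symmetric_space X N" "subl X N p" "x \<in> X"
  shows "- p (\<lambda>t. - x t) \<le> p x"
proof -
  have "p (\<lambda>t. x t + - x t) \<le> p x + p (\<lambda>t. - x t)"
    by (rule subl_add[OF assms(2,3) ss_neg[OF assms(1,3)]])
  then show ?thesis using subl_zero[OF assms(1,2)] by simp
qed

definition stepf :: "((real \<Rightarrow> real) \<Rightarrow> real) \<Rightarrow> (real \<Rightarrow> real) \<Rightarrow> (real \<Rightarrow> real) \<Rightarrow> real" where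
  "stepf p d x = (INF s\<in>{0..}. p (\<lambda>t. x t + s * d t) - s * p d)"

lemma step_elem_low:
  assumes "symmetric_space X N" "subl X N p" "d \<in> X" "x \<in> X" "s \<ge> 0"
  shows "- p (\<lambda>t. - x t) \<le> p (\<lambda>t. x t + s * d t) - s * p d"
proof -
  have xs: "(\<lambda>t. x t + s * d t) \<in> X" using ss_add[OF assms(1,4) ss_smult[OF assms(1,3)]] .
  have "p (\<lambda>t. (x t + s * d t) + - x t) \<le> p (\<lambda>t. x t + s * d t) + p (\<lambda>t. - x t)"
    by (rule subl_add[OF assms(2) xs ss_neg[OF assms(1,4)]])
  moreover have "p (\<lambda>t. s * d t) = s * p d" by (rule subl_hom[OF assms(2,3,5)])
  ultimately show ?thesis by simp
qed

lemma step_bdd: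
  assumes "symmetric_space X N" "subl X N p" "d \<in> X" "x \<in> X"
  shows "bdd_below ((\<lambda>s. p (\<lambda>t. x t + s * d t) - s * p d) ` {0..})"
  using step_elem_low[OF assms] by (intro bdd_belowI[where m="- p (\<lambda>t. - x t)"]) auto

lemma step_le:
  assumes "symmetric_space X N" "subl X N p" "d \<in> X" "x \<in> X" "s \<ge> 0"
  shows "stepf p d x \<le> p (\<lambda>t. x t + s * d t) - s * p d"
  unfolding stepf_def using step_bdd[OF assms(1-4)] assms(5) by (intro cINF_lower) auto

lemma step_ge:
  assumes "symmetric_space X N" "subl X N p" "d \<in> X" "x \<in> X"
  shows "- p (\<lambda>t. - x t) \<le> stepf p d x"
  unfolding stepf_def using step_elem_low[OF assms] by (intro cINF_greatest) auto

lemma step_le_p: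
  assumes "symmetric_space X N" "subl X N p" "d \<in> X" "x \<in> X"
  shows "stepf p d x \<le> p x"
  using step_le[OF assms, of 0] by simp

lemma step_d:
  assumes "symmetric_space X N" "subl X N p" "d \<in> X"
  shows "stepf p d d = p d"
proof (rule antisym)
  show "stepf p d d \<le> p d" by (rule step_le_p[OF assms assms(3)])
  show "p d \<le> stepf p d d" unfolding stepf_def
  proof (rule cINF_greatest)
    fix s :: real assume "s \<in> {0..}"
    then have s: "s \<ge> 0" by auto
    have e: "(\<lambda>t. d t + s * d t) = (\<lambda>t. (1 + s) * d t)" by (auto simp: algebra_simps)
    have "p (\<lambda>t. (1 + s) * d t) = (1 + s) * p d" by (rule subl_hom[OF assms(2,3)]) (use s in auto)
    then have "p (\<lambda>t. d t + s * d t) = (1 + s) * p d" by (simp only: e)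
    then show "p d \<le> p (\<lambda>t. d t + s * d t) - s * p d" by (simp add: algebra_simps)
  qed auto
qed

lemma step_negd:
  assumes "symmetric_space X N" "subl X N p" "d \<in> X"
  shows "stepf p d (\<lambda>t. - d t) \<le> - p d"
  using step_le[OF assms ss_neg[OF assms(1,3)], of 1] subl_zero[OF assms(1,2)] by simp

lemma step_subl:
  assumes SS: "symmetric_space X N" and P: "subl X N p" and d: "d \<in> X"
  shows "subl X N (stepf p d)"
  unfolding subl_def
proof (intro conjI ballI allI impI)
  fix x y assume x: "x \<in> X" and y: "y \<in> X"
  have xy: "(\<lambda>t. x t + y t) \<in> X" by (rule ss_add[OF SS x y])
  have key: "stepf p d (\<lambda>t. x t + y t) \<le> (p (\<lambda>t. x t + s1 * d t) - s1 * p d) + (p (\<lambda>t. y t + s2 * d t) - s2 * p d)"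
    if s1: "s1 \<ge> 0" and s2: "s2 \<ge> 0" for s1 s2
  proof -
    have "stepf p d (\<lambda>t. x t + y t) \<le> p (\<lambda>t. (x t + y t) + (s1 + s2) * d t) - (s1 + s2) * p d"
      by (rule step_le[OF SS P d xy]) (use s1 s2 in auto)
    also have "(\<lambda>t. (x t + y t) + (s1 + s2) * d t) = (\<lambda>t. (x t + s1 * d t) + (y t + s2 * d t))"
      by (auto simp: algebra_simps)
    also have "p \<dots> \<le> p (\<lambda>t. x t + s1 * d t) + p (\<lambda>t. y t + s2 * d t)"
      by (rule subl_add[OF P ss_add[OF SS x ss_smult[OF SS d]] ss_add[OF SS y ss_smult[OF SS d]]])
    finally show ?thesis by (simp add: algebra_simps)
  qed
  have "stepf p d (\<lambda>t. x t + y t) - (p (\<lambda>t. x t + s1 * d t) - s1 * p d) \<le> stepf p d y" if s1: "s1 \<ge> 0" for s1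
    unfolding stepf_def[of p d y]
  proof (rule cINF_greatest)
    fix s2 :: real assume "s2 \<in> {0..}"
    then have s2: "s2 \<ge> 0" by simp
    show "stepf p d (\<lambda>t. x t + y t) - (p (\<lambda>t. x t + s1 * d t) - s1 * p d) \<le> p (\<lambda>t. y t + s2 * d t) - s2 * p d"
      using key[OF s1 s2] by linarith
  qed simp
  then have "stepf p d (\<lambda>t. x t + y t) - stepf p d y \<le> stepf p d x"
    unfolding stepf_def[of p d x]
    by (intro cINF_greatest) (auto simp: algebra_simps)
  then show "stepf p d (\<lambda>t. x t + y t) \<le> stepf p d x + stepf p d y" by simp
next
  fix x and c :: real assume x: "x \<in> X" and c: "c \<ge> 0"
  have cx: "(\<lambda>t. c * x t) \<in> X" by (rule ss_smult[OF SS x])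
  show "stepf p d (\<lambda>t. c * x t) = c * stepf p d x"
  proof (cases "c = 0")
    case True
    have "stepf p d (\<lambda>t. c * x t) \<le> 0"
      using step_le[OF SS P d cx, of 0] subl_zero[OF SS P] True by simp
    moreover have "0 \<le> stepf p d (\<lambda>t. c * x t)"
      using step_ge[OF SS P d cx] subl_zero[OF SS P] True by simp
    ultimately show ?thesis using True by simp
  next
    case False
    then have cp: "c > 0" using c by auto
    have hom: "p (\<lambda>t. c * x t + (c * s) * d t) = c * p (\<lambda>t. x t + s * d t)" for s
    proof -
      have "(\<lambda>t. c * x t + (c * s) * d t) = (\<lambda>t. c * (x t + s * d t))" by (auto simp: algebra_simps)
      then show ?thesis using subl_hom[OF P ss_add[OF SS x ss_smult[OF SS d]] c] by simp
    qed
    have le1: "stepf p d (\<lambda>t. c * x t) / c \<le> stepf p d x"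
      unfolding stepf_def[of p d x]
    proof (rule cINF_greatest)
      fix s :: real assume "s \<in> {0..}"
      then have s: "s \<ge> 0" by auto
      have "stepf p d (\<lambda>t. c * x t) \<le> p (\<lambda>t. c * x t + (c * s) * d t) - (c * s) * p d"
        by (rule step_le[OF SS P d cx]) (use s c in auto)
      also have "\<dots> = c * (p (\<lambda>t. x t + s * d t) - s * p d)" using hom[of s] by (simp add: right_diff_distrib)
      finally show "stepf p d (\<lambda>t. c * x t) / c \<le> p (\<lambda>t. x t + s * d t) - s * p d"
        using cp by (simp add: divide_le_eq mult.commute)
    qed auto
    have le2: "c * stepf p d x \<le> stepf p d (\<lambda>t. c * x t)"
      unfolding stepf_def[of p d "\<lambda>t. c * x t"]
    proof (rule cINF_greatest)
      fix s :: real assume "s \<in> {0..}"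
      then have s: "s \<ge> 0" by auto
      have "stepf p d x \<le> p (\<lambda>t. x t + (s / c) * d t) - (s / c) * p d"
        by (rule step_le[OF SS P d x]) (use s cp in auto)
      then have "c * stepf p d x \<le> c * (p (\<lambda>t. x t + (s / c) * d t) - (s / c) * p d)"
        using cp by simp
      also have "\<dots> = p (\<lambda>t. c * x t + (c * (s / c)) * d t) - (c * (s / c)) * p d"
        using hom[of "s / c"] by (simp add: algebra_simps)
      also have "\<dots> = p (\<lambda>t. c * x t + s * d t) - s * p d" using cp by simp
      finally show "c * stepf p d x \<le> p (\<lambda>t. c * x t + s * d t) - s * p d" .
    qed auto
    from le1 le2 cp show ?thesis by (simp add: divide_le_eq mult.commute antisym)
  qed
next
  fix x assume x: "x \<in> X"
  show "stepf p d x \<le> N x" using step_le_p[OF SS P d x] subl_N[OF P x] by simp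
qed

primrec iter :: "((real \<Rightarrow> real) \<Rightarrow> real) \<Rightarrow> (nat \<Rightarrow> real \<Rightarrow> real) \<Rightarrow> nat \<Rightarrow> (real \<Rightarrow> real) \<Rightarrow> real" where
  "iter p e 0 = p"
| "iter p e (Suc n) = stepf (iter p e n) (e n)"

lemma iter_subl:
  assumes SS: "symmetric_space X N" and P: "subl X N p" and E: "\<forall>k. e k \<in> X"
  shows "subl X N (iter p e n)"
  by (induction n) (simp_all add: P step_subl[OF SS _ E[rule_format]])

lemma iter_dec:
  assumes SS: "symmetric_space X N" and P: "subl X N p" and E: "\<forall>k. e k \<in> X" and x: "x \<in> X"
  shows "iter p e (Suc n) x \<le> iter p e n x"
  using step_le_p[OF SS iter_subl[OF SS P E] E[rule_format] x] by simp

lemma iter_decseq: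
  assumes SS: "symmetric_space X N" and P: "subl X N p" and E: "\<forall>k. e k \<in> X" and x: "x \<in> X"
  shows "decseq (\<lambda>n. iter p e n x)"
  using iter_dec[OF assms] by (intro decseq_SucI) auto

lemma iter_le:
  assumes SS: "symmetric_space X N" and P: "subl X N p" and E: "\<forall>k. e k \<in> X" and x: "x \<in> X"
    and mn: "m \<le> n"
  shows "iter p e n x \<le> iter p e m x"
  using decseqD[OF iter_decseq[OF SS P E x] mn] by simp

lemma iter_low:
  assumes SS: "symmetric_space X N" and P: "subl X N p" and E: "\<forall>k. e k \<in> X" and x: "x \<in> X"
  shows "- p (\<lambda>t. - x t) \<le> iter p e n x"
proof -
  have "- iter p e n (\<lambda>t. - x t) \<le> iter p e n x" by (rule subl_low[OF SS iter_subl[OF SS P E] x])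
  moreover have "iter p e n (\<lambda>t. - x t) \<le> iter p e 0 (\<lambda>t. - x t)"
    by (rule iter_le[OF SS P E ss_neg[OF SS x]]) simp
  ultimately show ?thesis by simp
qed

definition hq :: "((real \<Rightarrow> real) \<Rightarrow> real) \<Rightarrow> (nat \<Rightarrow> real \<Rightarrow> real) \<Rightarrow> (real \<Rightarrow> real) \<Rightarrow> real" where
  "hq p e x = (INF n. iter p e n x)"

lemma hq_lim:
  assumes SS: "symmetric_space X N" and P: "subl X N p" and E: "\<forall>k. e k \<in> X" and x: "x \<in> X"
  shows "(\<lambda>n. iter p e n x) \<longlonglongrightarrow> hq p e x"
  unfolding hq_def
  by (rule LIMSEQ_decseq_INF[OF _ iter_decseq[OF assms]])
     (use iter_low[OF assms] in \<open>auto intro!: bdd_belowI\<close>)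

lemma hq_le_iter:
  assumes SS: "symmetric_space X N" and P: "subl X N p" and E: "\<forall>k. e k \<in> X" and x: "x \<in> X"
  shows "hq p e x \<le> iter p e n x"
  unfolding hq_def
  by (rule cINF_lower) (use iter_low[OF assms] in \<open>auto intro!: bdd_belowI\<close>)

lemma hq_le_p:
  assumes SS: "symmetric_space X N" and P: "subl X N p" and E: "\<forall>k. e k \<in> X" and x: "x \<in> X"
  shows "hq p e x \<le> p x"
  using hq_le_iter[OF assms, of 0] by simp

lemma hq_add:
  assumes SS: "symmetric_space X N" and P: "subl X N p" and E: "\<forall>k. e k \<in> X" and x: "x \<in> X" and y: "y \<in> X"
  shows "hq p e (\<lambda>t. x t + y t) \<le> hq p e x + hq p e y"
proof (rule LIMSEQ_le)
  show "(\<lambda>n. iter p e n (\<lambda>t. x t + y t)) \<longlonglongrightarrow> hq p e (\<lambda>t. x t + y t)"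
    by (rule hq_lim[OF SS P E ss_add[OF SS x y]])
  show "(\<lambda>n. iter p e n x + iter p e n y) \<longlonglongrightarrow> hq p e x + hq p e y"
    by (intro tendsto_add hq_lim[OF SS P E x] hq_lim[OF SS P E y])
  show "\<exists>N. \<forall>n\<ge>N. iter p e n (\<lambda>t. x t + y t) \<le> iter p e n x + iter p e n y"
    using subl_add[OF iter_subl[OF SS P E] x y] by auto
qed

lemma hq_hom:
  assumes SS: "symmetric_space X N" and P: "subl X N p" and E: "\<forall>k. e k \<in> X" and x: "x \<in> X" and c: "c \<ge> 0"
  shows "hq p e (\<lambda>t. c * x t) = c * hq p e x"
proof (rule LIMSEQ_unique)
  show "(\<lambda>n. iter p e n (\<lambda>t. c * x t)) \<longlonglongrightarrow> hq p e (\<lambda>t. c * x t)"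
    by (rule hq_lim[OF SS P E ss_smult[OF SS x]])
  have "(\<lambda>n. c * iter p e n x) \<longlonglongrightarrow> c * hq p e x"
    by (intro tendsto_mult_left hq_lim[OF SS P E x])
  moreover have "(\<lambda>n. iter p e n (\<lambda>t. c * x t)) = (\<lambda>n. c * iter p e n x)"
    using subl_hom[OF iter_subl[OF SS P E] x c] by simp
  ultimately show "(\<lambda>n. iter p e n (\<lambda>t. c * x t)) \<longlonglongrightarrow> c * hq p e x" by simp
qed

lemma hq_ek:
  assumes SS: "symmetric_space X N" and P: "subl X N p" and E: "\<forall>k. e k \<in> X"
  shows "hq p e (e k) + hq p e (\<lambda>t. - e k t) = 0"
proof (rule LIMSEQ_unique)
  show "(\<lambda>n. iter p e n (e k) + iter p e n (\<lambda>t. - e k t)) \<longlonglongrightarrow> hq p e (e k) + hq p e (\<lambda>t. - e k t)"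
    by (intro tendsto_add hq_lim[OF SS P E E[rule_format]] hq_lim[OF SS P E ss_neg[OF SS E[rule_format]]])
  have ev: "iter p e n (e k) + iter p e n (\<lambda>t. - e k t) = 0" if n: "n \<ge> Suc k" for n
  proof -
    have S: "subl X N (iter p e k)" by (rule iter_subl[OF SS P E])
    have a: "iter p e (Suc k) (e k) = iter p e k (e k)" using step_d[OF SS S E[rule_format]] by simp
    have b: "iter p e (Suc k) (\<lambda>t. - e k t) \<le> - iter p e k (e k)" using step_negd[OF SS S E[rule_format]] by simp
    have "iter p e n (e k) + iter p e n (\<lambda>t. - e k t) \<le> iter p e (Suc k) (e k) + iter p e (Suc k) (\<lambda>t. - e k t)"
      using iter_le[OF SS P E E[rule_format, of k] n] iter_le[OF SS P E ss_neg[OF SS E[rule_format, of k]] n] by linarith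
    also have "\<dots> \<le> 0" using a b by linarith
    finally have le: "iter p e n (e k) + iter p e n (\<lambda>t. - e k t) \<le> 0" .
    have "- iter p e n (\<lambda>t. - e k t) \<le> iter p e n (e k)" by (rule subl_low[OF SS iter_subl[OF SS P E] E[rule_format]])
    with le show ?thesis by linarith
  qed
  show "(\<lambda>n. iter p e n (e k) + iter p e n (\<lambda>t. - e k t)) \<longlonglongrightarrow> 0"
    by (rule tendsto_eventually) (use ev in \<open>auto simp: eventually_sequentially\<close>)
qed

lemma hq_subl:
  assumes SS: "symmetric_space X N" and P: "subl X N p" and E: "\<forall>k. e k \<in> X"
  shows "subl X N (hq p e)"
  unfolding subl_def
proof (intro conjI ballI allI impI)
  fix x y assume "x \<in> X" "y \<in> X"
  then show "hq p e (\<lambda>t. x t + y t) \<le> hq p e x + hq p e y" by (rule hq_add[OF SS P E])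
next
  fix x and c :: real assume "x \<in> X" "c \<ge> 0"
  then show "hq p e (\<lambda>t. c * x t) = c * hq p e x" by (rule hq_hom[OF SS P E])
next
  fix x assume x: "x \<in> X"
  show "hq p e x \<le> N x" using hq_le_p[OF SS P E x] subl_N[OF P x] by simp
qed

lemma hb_main:
  fixes e :: "nat \<Rightarrow> real \<Rightarrow> real"
  assumes SS: "symmetric_space X N" and P: "subl X N p" and E: "\<forall>k. e k \<in> X"
    and D: "\<forall>x\<in>X. \<forall>\<epsilon>>0. \<exists>k. N (\<lambda>t. x t - e k t) < \<epsilon>"
  shows "\<exists>q. (\<forall>x\<in>X. \<forall>y\<in>X. q (\<lambda>t. x t + y t) = q x + q y) \<and>
             (\<forall>x\<in>X. \<forall>c. q (\<lambda>t. c * x t) = c * q x) \<and>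
             (\<forall>x\<in>X. q x \<le> p x) \<and> (\<forall>x\<in>X. \<bar>q x\<bar> \<le> N x) \<and> q (e 0) = p (e 0)"
proof -
  define q where "q = hq p e"
  have Q: "subl X N q" unfolding q_def by (rule hq_subl[OF SS P E])
  define r where "r x = q x + q (\<lambda>t. - x t)" for x
  have r0: "r x \<ge> 0" if x: "x \<in> X" for x
    using subl_low[OF SS Q x] unfolding r_def by simp
  have qdiff: "q x \<le> q y + N (\<lambda>t. x t - y t)" if x: "x \<in> X" and y: "y \<in> X" for x y
  proof -
    have "q (\<lambda>t. y t + (x t - y t)) \<le> q y + q (\<lambda>t. x t - y t)"
      by (rule subl_add[OF Q y ss_diff[OF SS x y]])
    moreover have "q (\<lambda>t. x t - y t) \<le> N (\<lambda>t. x t - y t)" by (rule subl_N[OF Q ss_diff[OF SS x y]])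
    ultimately show ?thesis by simp
  qed
  have rdiff: "r x \<le> r y + 2 * N (\<lambda>t. x t - y t)" if x: "x \<in> X" and y: "y \<in> X" for x y
  proof -
    have a: "q x \<le> q y + N (\<lambda>t. x t - y t)" by (rule qdiff[OF x y])
    have b: "q (\<lambda>t. - x t) \<le> q (\<lambda>t. - y t) + N (\<lambda>t. - x t - - y t)"
      by (rule qdiff[OF ss_neg[OF SS x] ss_neg[OF SS y]])
    have "N (\<lambda>t. - x t - - y t) = N (\<lambda>t. y t - x t)" by simp
    also have "\<dots> = N (\<lambda>t. x t - y t)" by (rule ss_Ndiff_sym[OF SS x y])
    finally show ?thesis using a b unfolding r_def by linarith
  qed
  have rek: "r (e k) = 0" for k unfolding r_def q_def by (rule hq_ek[OF SS P E])
  have rz: "r x = 0" if x: "x \<in> X" for x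
  proof (rule ccontr)
    assume "r x \<noteq> 0"
    with r0[OF x] have pos: "r x > 0" by simp
    then obtain k where k: "N (\<lambda>t. x t - e k t) < r x / 4" using D x by (meson zero_less_divide_iff zero_less_numeral)
    have "r x \<le> r (e k) + 2 * N (\<lambda>t. x t - e k t)" by (rule rdiff[OF x E[rule_format]])
    with k rek[of k] pos show False by linarith
  qed
  have qneg: "q (\<lambda>t. - x t) = - q x" if x: "x \<in> X" for x
    using rz[OF x] unfolding r_def by simp
  have add: "q (\<lambda>t. x t + y t) = q x + q y" if x: "x \<in> X" and y: "y \<in> X" for x y
  proof -
    have a: "q (\<lambda>t. x t + y t) \<le> q x + q y" by (rule subl_add[OF Q x y])
    have "q (\<lambda>t. - x t + - y t) \<le> q (\<lambda>t. - x t) + q (\<lambda>t. - y t)"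
      by (rule subl_add[OF Q ss_neg[OF SS x] ss_neg[OF SS y]])
    moreover have "(\<lambda>t. - x t + - y t) = (\<lambda>t. - (x t + y t))" by simp
    ultimately have "q (\<lambda>t. - (x t + y t)) \<le> q (\<lambda>t. - x t) + q (\<lambda>t. - y t)" by simp
    then have "- q (\<lambda>t. x t + y t) \<le> - q x - q y"
      using qneg[OF ss_add[OF SS x y]] qneg[OF x] qneg[OF y] by simp
    with a show ?thesis by simp
  qed
  have hom: "q (\<lambda>t. c * x t) = c * q x" if x: "x \<in> X" for x c
  proof (cases "c \<ge> 0")
    case True
    then show ?thesis by (rule subl_hom[OF Q x])
  next
    case False
    have "q (\<lambda>t. (- c) * (- x t)) = (- c) * q (\<lambda>t. - x t)"
      by (rule subl_hom[OF Q ss_neg[OF SS x]]) (use False in simp)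
    then show ?thesis using qneg[OF x] by simp
  qed
  have lep: "q x \<le> p x" if x: "x \<in> X" for x
    unfolding q_def by (rule hq_le_p[OF SS P E x])
  have bnd: "\<bar>q x\<bar> \<le> N x" if x: "x \<in> X" for x
  proof -
    have "q x \<le> N x" by (rule subl_N[OF Q x])
    moreover have "q (\<lambda>t. - x t) \<le> N (\<lambda>t. - x t)" by (rule subl_N[OF Q ss_neg[OF SS x]])
    ultimately show ?thesis using qneg[OF x] ss_Nneg[OF SS x] by simp
  qed
  have e0: "q (e 0) = p (e 0)"
  proof -
    have e0X: "e 0 \<in> X" using E by simp
    have a: "q (e 0) \<le> iter p e 1 (e 0)" unfolding q_def by (rule hq_le_iter[OF SS P E e0X])
    have b: "q (\<lambda>t. - e 0 t) \<le> iter p e 1 (\<lambda>t. - e 0 t)" unfolding q_def by (rule hq_le_iter[OF SS P E ss_neg[OF SS e0X]])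
    have c: "iter p e 1 (e 0) = p (e 0)" using step_d[OF SS P e0X] by simp
    have d: "iter p e 1 (\<lambda>t. - e 0 t) \<le> - p (e 0)" using step_negd[OF SS P e0X] by simp
    show ?thesis using a b c d qneg[OF e0X] by linarith
  qed
  show ?thesis using add hom lep bnd e0 by blast
qed

lemma m01_space[simp]: "space M01 = {0..1}" by simp

lemma cc_leb: "{0..1::real} \<in> sets lebesgue" by simp

lemma m01_sets: "A \<in> sets M01 \<longleftrightarrow> A \<subseteq> {0..1} \<and> A \<in> sets lebesgue"
  by (simp add: sets_restrict_space_iff)

lemma m01_emeasure: "A \<subseteq> {0..1} \<Longrightarrow> emeasure M01 A = emeasure lebesgue A"
  by (rule emeasure_restrict_space) auto

lemma m01_measure: "A \<subseteq> {0..1} \<Longrightarrow> measure M01 A = measure lebesgue A"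
  by (rule measure_restrict_space) auto

lemma m01_fin: "finite_measure M01"
  by (rule finite_measure_lebesgue_on) simp

lemma m01_total: "measure M01 {0..1} = 1"
  by (simp add: m01_measure)

lemma m01_emeasure_fin: "emeasure M01 A \<noteq> \<infinity>"
  using finite_measure.emeasure_finite[OF m01_fin] by simp

lemma m01_emeasure_eq: "emeasure M01 A = ennreal (measure M01 A)"
  using finite_measure.emeasure_eq_measure[OF m01_fin] .

lemma m01_Ioc: assumes "a \<le> b" shows "measure M01 ({0..1} \<inter> {a<..b}) \<le> b - a"
proof -
  have "measure M01 ({0..1} \<inter> {a<..b}) = measure lebesgue ({0..1} \<inter> {a<..b})"
    by (rule m01_measure) auto
  also have "\<dots> \<le> measure lebesgue {a..b}"
    by (rule measure_mono_fmeasurable) auto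
  also have "\<dots> = b - a" using assms by simp
  finally show ?thesis .
qed

lemma m01_AE_cover: assumes "U \<in> sets M01" "measure M01 U = 1" shows "AE t in M01. t \<in> U"
proof -
  have U01: "U \<subseteq> {0..1}" using assms(1) m01_sets by blast
  have "measure M01 ({0..1} - U) = measure M01 {0..1} - measure M01 U"
    by (rule measure_Diff) (use assms(1) U01 m01_emeasure_fin in auto)
  then have "measure M01 ({0..1} - U) = 0" using assms(2) m01_total by simp
  then have "emeasure M01 ({0..1} - U) = 0" using m01_emeasure_eq by simp
  then have "{0..1} - U \<in> null_sets M01" using assms(1) by auto
  then show ?thesis by (rule AE_I') auto
qed

lemma shift_inj: assumes "(n::nat) > 0" shows "inj_on (\<lambda>j. (j + k) mod n) {..<n}"
proof (rule inj_onI)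
  fix a b assume a: "a \<in> {..<n}" and b: "b \<in> {..<n}" and e: "(a + k) mod n = (b + k) mod n"
  from e have "a mod n = b mod n" by (simp add: nat_mod_eq_iff)
  with a b show "a = b" by simp
qed

lemma shift_bij: assumes "(n::nat) > 0" shows "bij_betw (\<lambda>j. (j + k) mod n) {..<n} {..<n}"
proof -
  have "(\<lambda>j. (j + k) mod n) ` {..<n} \<subseteq> {..<n}" using assms by auto
  then have "(\<lambda>j. (j + k) mod n) ` {..<n} = {..<n}"
    by (rule endo_inj_surj[OF finite_lessThan _ shift_inj[OF assms]])
  then show ?thesis using shift_inj[OF assms] by (simp add: bij_betw_def)
qed

lemma sum_shift: assumes "(n::nat) > 0" shows "(\<Sum>k<n. b ((j + k) mod n)) = (\<Sum>i<n. b i)"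
proof -
  have "bij_betw (\<lambda>k. (k + j) mod n) {..<n} {..<n}" by (rule shift_bij[OF assms])
  then have "(\<Sum>k<n. b ((k + j) mod n)) = (\<Sum>i<n. b i)" by (rule sum.reindex_bij_betw)
  then show ?thesis by (simp add: add.commute)
qed

lemma card_shift: assumes "(n::nat) > 0"
  shows "card {j\<in>{..<n}. P ((j + k) mod n)} = card {j\<in>{..<n}. P j}"
proof -
  let ?f = "\<lambda>j. (j + k) mod n"
  have inj: "inj_on ?f {j\<in>{..<n}. P (?f j)}" using shift_inj[OF assms] by (rule inj_on_subset) auto
  have im: "?f ` {..<n} = {..<n}" using shift_bij[OF assms, of k] unfolding bij_betw_def by (rule conjunct2)
  have "?f ` {j\<in>{..<n}. P (?f j)} = {y \<in> ?f ` {..<n}. P y}" by auto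
  then have img: "?f ` {j\<in>{..<n}. P (?f j)} = {j\<in>{..<n}. P j}" by (simp only: im)
  show ?thesis using card_image[OF inj] img by simp
qed

lemma sum_ind_val:
  fixes c :: "nat \<Rightarrow> real"
  assumes "disjoint_family_on B {..<n}" "i < n" "t \<in> B i"
  shows "(\<Sum>j<n. c j * indicator (B j) t) = c i"
  using sum_indicator_disjoint_family[OF assms(1) assms(3)] assms(2) by simp

lemma sum_ind_meas:
  fixes c :: "nat \<Rightarrow> real"
  assumes "\<forall>j<n. B j \<in> sets M01"
  shows "(\<lambda>t. \<Sum>j<n. c j * indicator (B j) t) \<in> borel_measurable M01"
  using assms by (intro borel_measurable_sum borel_measurable_times borel_measurable_const borel_measurable_indicator) auto

lemma level_measure:
  fixes c :: "nat \<Rightarrow> real"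
  assumes n: "n > 0" and B: "\<forall>j<n. B j \<in> sets M01"
    and disj: "disjoint_family_on B {..<n}" and mB: "\<forall>j<n. measure M01 (B j) = 1 / n"
    and cov: "AE t in M01. \<exists>i<n. t \<in> B i"
  shows "measure M01 {t \<in> space M01. r < (\<Sum>j<n. c j * indicator (B j) t)} = card {j\<in>{..<n}. r < c j} / n"
proof -
  let ?S = "{t \<in> space M01. r < (\<Sum>j<n. c j * indicator (B j) t)}"
  let ?I = "{j\<in>{..<n}. r < c j}"
  let ?V = "\<Union>j\<in>?I. B j"
  have Ssets: "?S \<in> sets M01"
    using sum_ind_meas[OF B, of c] by (simp add: borel_measurable_iff_greater)
  have Vsets: "?V \<in> sets M01" using B by auto
  have "AE t in M01. t \<in> ?S \<longleftrightarrow> t \<in> ?V"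
    using cov
  proof (rule AE_mp, intro AE_I2 impI)
    fix t assume "\<exists>i<n. t \<in> B i"
    then obtain i where i: "i < n" "t \<in> B i" by blast
    have tsp: "t \<in> space M01" using B i sets.sets_into_space by blast
    have "t \<in> ?S \<longleftrightarrow> r < c i" using sum_ind_val[OF disj i(1,2), of c] tsp by simp
    moreover have "t \<in> ?V \<longleftrightarrow> r < c i"
    proof
      assume "t \<in> ?V"
      then obtain j where j: "j < n" "r < c j" "t \<in> B j" by auto
      have "j = i" using disj j(1,3) i unfolding disjoint_family_on_def by blast
      then show "r < c i" using j by simp
    next
      assume "r < c i" then show "t \<in> ?V" using i by auto
    qed
    ultimately show "t \<in> ?S \<longleftrightarrow> t \<in> ?V" by simp
  qed
  then have "measure M01 ?S = measure M01 ?V" by (rule measure_eq_AE[OF _ Ssets Vsets])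
  also have "\<dots> = (\<Sum>j\<in>?I. measure M01 (B j))"
    by (rule measure_finite_Union) (use B disj m01_emeasure_fin in \<open>auto intro: disjoint_family_on_mono\<close>)
  also have "\<dots> = (\<Sum>j\<in>?I. 1 / n)" using mB by (intro sum.cong) auto
  also have "\<dots> = card ?I / n" by simp
  finally show ?thesis .
qed

lemma core:
  fixes b :: "nat \<Rightarrow> real" and B :: "nat \<Rightarrow> real set"
  assumes SS: "symmetric_space X N" and n: "n > 0" and B: "\<forall>j<n. B j \<in> sets M01"
    and disj: "disjoint_family_on B {..<n}" and mB: "\<forall>j<n. measure M01 (B j) = 1 / n"
    and sX: "(\<lambda>t. \<Sum>j<n. b j * indicator (B j) t) \<in> X"
  shows "\<bar>\<Sum>j<n. b j\<bar> \<le> n * N (\<lambda>t. \<Sum>j<n. b j * indicator (B j) t)"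
proof -
  define s where "s = (\<lambda>t. \<Sum>j<n. b j * indicator (B j) t)"
  define sk where "sk k = (\<lambda>t. \<Sum>j<n. b ((j + k) mod n) * indicator (B j) t)" for k
  let ?U = "\<Union>j\<in>{..<n}. B j"
  have Usets: "?U \<in> sets M01" using B by auto
  have "measure M01 ?U = (\<Sum>j\<in>{..<n}. measure M01 (B j))"
    by (rule measure_finite_Union) (use B disj m01_emeasure_fin in auto)
  also have "\<dots> = (\<Sum>j\<in>{..<n}. 1 / n)" using mB by (intro sum.cong) auto
  also have "\<dots> = 1" using n by simp
  finally have "measure M01 ?U = 1" .
  then have covU: "AE t in M01. t \<in> ?U" by (rule m01_AE_cover[OF Usets])
  have cov: "AE t in M01. \<exists>i<n. t \<in> B i" using covU by (rule AE_mp) auto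
  have sk_meas: "sk k \<in> borel_measurable M01" for k unfolding sk_def by (rule sum_ind_meas[OF B])
  have sk_eq: "sk k \<in> X \<and> N (sk k) = N s" for k
  proof -
    have "equimeasurable (sk k) s"
      unfolding equimeasurable_def
    proof
      fix r :: real
      have "measure M01 {t \<in> space M01. sk k t > r} = card {j\<in>{..<n}. r < b ((j + k) mod n)} / n"
        unfolding sk_def by (rule level_measure[OF n B disj mB cov])
      also have "\<dots> = card {j\<in>{..<n}. r < b j} / n" using card_shift[OF n, of "\<lambda>j. r < b j" k] by simp
      also have "\<dots> = measure M01 {t \<in> space M01. s t > r}"
        unfolding s_def by (rule level_measure[OF n B disj mB cov, symmetric])
      finally show "emeasure M01 {t \<in> space M01. sk k t > r} = emeasure M01 {t \<in> space M01. s t > r}"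
        by (simp add: m01_emeasure_eq)
    qed
    then show ?thesis using ss_ri[OF SS sX[folded s_def] sk_meas] by blast
  qed
  have sum1: "(\<lambda>t. \<Sum>k<n. sk k t) \<in> X \<and> N (\<lambda>t. \<Sum>k<n. sk k t) \<le> (\<Sum>k<n. N (sk k))"
    by (rule ss_sum[OF SS]) (use sk_eq in blast)
  have sum2: "(\<Sum>k<n. N (sk k)) = n * N s" using sk_eq by simp
  have ae: "AE t in M01. (\<Sum>k<n. sk k t) = (\<Sum>j<n. b j)"
    using cov
  proof (rule AE_mp, intro AE_I2 impI)
    fix t assume "\<exists>i<n. t \<in> B i"
    then obtain i where i: "i < n" "t \<in> B i" by blast
    have "(\<Sum>k<n. sk k t) = (\<Sum>k<n. b ((i + k) mod n))"
      unfolding sk_def by (intro sum.cong refl sum_ind_val[OF disj i])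
    also have "\<dots> = (\<Sum>j<n. b j)" by (rule sum_shift[OF n])
    finally show "(\<Sum>k<n. sk k t) = (\<Sum>j<n. b j)" .
  qed
  have "(\<lambda>_. \<Sum>j<n. b j) \<in> X \<and> N (\<lambda>_. \<Sum>j<n. b j) = N (\<lambda>t. \<Sum>k<n. sk k t)"
    by (rule ss_AE_eq[OF SS conjunct1[OF sum1] borel_measurable_const ae])
  then have "\<bar>\<Sum>j<n. b j\<bar> = N (\<lambda>t. \<Sum>k<n. sk k t)" using ss_const[OF SS, of "\<Sum>j<n. b j"] by simp
  also have "\<dots> \<le> n * N s" using sum1 sum2 by simp
  finally show ?thesis unfolding s_def .
qed

lemma core_J:
  fixes b :: "'a \<Rightarrow> real" and B :: "'a \<Rightarrow> real set" and J :: "'a set"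
  assumes SS: "symmetric_space X N" and J: "finite J" and cJ: "card J = n" and n: "n > 0"
    and B: "\<forall>x\<in>J. B x \<in> sets M01"
    and disj: "disjoint_family_on B J" and mB: "\<forall>x\<in>J. measure M01 (B x) = 1 / n"
    and sX: "(\<lambda>t. \<Sum>x\<in>J. b x * indicator (B x) t) \<in> X"
  shows "\<bar>\<Sum>x\<in>J. b x\<bar> \<le> n * N (\<lambda>t. \<Sum>x\<in>J. b x * indicator (B x) t)"
proof -
  obtain h where h: "bij_betw h {0..<card J} J" using ex_bij_betw_nat_finite[OF J] by blast
  then have h': "bij_betw h {..<n} J" using cJ by (simp add: lessThan_atLeast0)
  have re: "(\<Sum>j<n. f (h j)) = (\<Sum>x\<in>J. f x)" for f :: "'a \<Rightarrow> real"
    by (rule sum.reindex_bij_betw[OF h'])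
  have hJ: "h j \<in> J" if "j < n" for j using h' that unfolding bij_betw_def by auto
  have hinj: "inj_on h {..<n}" using h' unfolding bij_betw_def by simp
  have B': "\<forall>j<n. B (h j) \<in> sets M01" using B hJ by auto
  have disj': "disjoint_family_on (\<lambda>j. B (h j)) {..<n}"
    unfolding disjoint_family_on_def
  proof (intro ballI impI)
    fix i j assume i: "i \<in> {..<n}" and j: "j \<in> {..<n}" and ij: "i \<noteq> j"
    have "h i \<noteq> h j" using hinj i j ij unfolding inj_on_def by blast
    then show "B (h i) \<inter> B (h j) = {}" using disj hJ i j unfolding disjoint_family_on_def by auto
  qed
  have mB': "\<forall>j<n. measure M01 (B (h j)) = 1 / n" using mB hJ by auto
  have fe: "(\<lambda>t. \<Sum>j<n. b (h j) * indicator (B (h j)) t) = (\<lambda>t. \<Sum>x\<in>J. b x * indicator (B x) t)"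
  proof
    fix t show "(\<Sum>j<n. b (h j) * indicator (B (h j)) t) = (\<Sum>x\<in>J. b x * indicator (B x) t)"
      by (rule re[of "\<lambda>x. b x * indicator (B x) t"])
  qed
  have "\<bar>\<Sum>j<n. b (h j)\<bar> \<le> n * N (\<lambda>t. \<Sum>j<n. b (h j) * indicator (B (h j)) t)"
    by (rule core[OF SS n B' disj' mB']) (use sX fe in simp)
  then show ?thesis using fe re[of b] by simp
qed

lemma atMost_m01: "A \<in> sets M01 \<Longrightarrow> A \<inter> {..t} \<in> sets M01"
proof -
  assume A: "A \<in> sets M01"
  have "{..t} \<in> sets lebesgue" by simp
  then show ?thesis using A m01_sets by auto
qed

lemma Ioc_m01: "A \<in> sets M01 \<Longrightarrow> A \<inter> {a<..b} \<in> sets M01"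
proof -
  assume A: "A \<in> sets M01"
  have "{a<..b} \<in> sets lebesgue" by simp
  then show ?thesis using A m01_sets by auto
qed

lemma partition:
  assumes A: "A \<in> sets M01" and n: "n > 0" and p: "real p \<le> real n * measure M01 A"
  shows "\<exists>C. (\<forall>i<p. C i \<in> sets M01 \<and> C i \<subseteq> A \<and> measure M01 (C i) = 1 / n) \<and> disjoint_family_on C {..<p}"
proof -
  define g where "g t = measure M01 (A \<inter> {..t})" for t
  have A01: "A \<subseteq> {0..1}" using A m01_sets by blast
  have split: "g t' = g t + measure M01 (A \<inter> {t<..t'})" if tt: "t \<le> t'" for t t'
  proof -
    have "A \<inter> {..t'} = (A \<inter> {..t}) \<union> (A \<inter> {t<..t'})" using tt by auto
    then have "g t' = measure M01 ((A \<inter> {..t}) \<union> (A \<inter> {t<..t'}))" unfolding g_def by simp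
    also have "\<dots> = measure M01 (A \<inter> {..t}) + measure M01 (A \<inter> {t<..t'})"
      by (rule finite_measure.finite_measure_Union[OF m01_fin atMost_m01[OF A] Ioc_m01[OF A]]) auto
    finally show ?thesis unfolding g_def .
  qed
  have gmono: "g t \<le> g t'" if "t \<le> t'" for t t' using split[OF that] by simp
  have glip: "g t' - g t \<le> t' - t" if tt: "t \<le> t'" for t t'
  proof -
    have "measure M01 (A \<inter> {t<..t'}) \<le> measure M01 ({0..1} \<inter> {t<..t'})"
      by (rule finite_measure.finite_measure_mono[OF m01_fin]) (use A01 in \<open>auto intro: Ioc_m01[OF sets_lebesgue_on_refl]\<close>)
    also have "\<dots> \<le> t' - t" by (rule m01_Ioc[OF tt])
    finally show ?thesis using split[OF tt] by simp
  qed
  have gcont: "continuous_on {-1..1} g"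
  proof (rule lipschitz_on_continuous_on)
    show "1-lipschitz_on {-1..1} g"
    proof (rule lipschitz_onI)
      fix x y :: real
      show "dist (g x) (g y) \<le> 1 * dist x y"
      proof (cases "x \<le> y")
        case True then show ?thesis using glip[OF True] gmono[OF True] by (simp add: dist_real_def)
      next
        case False then have "y \<le> x" by simp
        then show ?thesis using glip[of y x] gmono[of y x] by (simp add: dist_real_def)
      qed
    qed simp
  qed
  have gm1: "g (-1) = 0"
  proof -
    have "A \<inter> {..-1} = {}" using A01 by auto
    then show ?thesis unfolding g_def by simp
  qed
  have g1: "g 1 = measure M01 A"
  proof -
    have "A \<inter> {..1} = A" using A01 by auto
    then show ?thesis unfolding g_def by simp
  qed
  have "\<forall>i. \<exists>\<tau>. i \<le> p \<longrightarrow> (-1 \<le> \<tau> \<and> \<tau> \<le> 1 \<and> g \<tau> = real i / real n)"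
  proof
    fix i
    show "\<exists>\<tau>. i \<le> p \<longrightarrow> (-1 \<le> \<tau> \<and> \<tau> \<le> 1 \<and> g \<tau> = real i / real n)"
    proof (cases "i \<le> p")
      case True
      have "real i / real n \<le> real p / real n" using True n by (simp add: divide_right_mono)
      also have "\<dots> \<le> measure M01 A" using p n by (simp add: divide_le_eq mult.commute)
      finally have up: "real i / real n \<le> g 1" using g1 by simp
      have lo: "g (-1) \<le> real i / real n" using gm1 by simp
      obtain \<tau> where "-1 \<le> \<tau>" "\<tau> \<le> 1" "g \<tau> = real i / real n"
        using IVT'[of g "-1" "real i / real n" 1, OF lo up _ gcont] by auto
      then show ?thesis by blast
    qed auto
  qed
  then have "\<exists>\<tau>. \<forall>i. i \<le> p \<longrightarrow> (-1 \<le> \<tau> i \<and> \<tau> i \<le> 1 \<and> g (\<tau> i) = real i / real n)"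
    by (rule choice)
  then obtain \<tau> where tau0: "\<forall>i. i \<le> p \<longrightarrow> (-1 \<le> \<tau> i \<and> \<tau> i \<le> 1 \<and> g (\<tau> i) = real i / real n)"
    by (elim exE)
  have tau: "g (\<tau> i) = real i / real n" if "i \<le> p" for i using tau0 that by simp
  have tau_strict: "\<tau> i < \<tau> j" if ij: "i < j" "j \<le> p" for i j
  proof (rule ccontr)
    assume "\<not> \<tau> i < \<tau> j"
    then have "g (\<tau> j) \<le> g (\<tau> i)" using gmono by simp
    then have "real j / real n \<le> real i / real n" using tau ij by simp
    then have "real j \<le> real i" using n by (simp add: divide_le_cancel)
    with ij show False by simp
  qed
  define C where "C i = A \<inter> {\<tau> i<..\<tau> (Suc i)}" for i
  have Csets: "C i \<in> sets M01" for i unfolding C_def by (rule Ioc_m01[OF A])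
  have Cmeas: "measure M01 (C i) = 1 / n" if i: "i < p" for i
  proof -
    have le: "\<tau> i \<le> \<tau> (Suc i)" using tau_strict[of i "Suc i"] i by simp
    have "g (\<tau> (Suc i)) = g (\<tau> i) + measure M01 (C i)" unfolding C_def by (rule split[OF le])
    then show ?thesis using tau[of i] tau[of "Suc i"] i n by (simp add: field_simps)
  qed
  have Cdisj: "disjoint_family_on C {..<p}"
    unfolding disjoint_family_on_def
  proof (intro ballI impI)
    fix i j assume i: "i \<in> {..<p}" and j: "j \<in> {..<p}" and ij: "i \<noteq> j"
    have key: "C a \<inter> C b = {}" if ab: "a < b" "b < p" for a b
    proof -
      have "\<tau> (Suc a) \<le> \<tau> b"
      proof (cases "Suc a = b")
        case True then show ?thesis by simp
      next
        case False then show ?thesis using tau_strict[of "Suc a" b] ab by simp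
      qed
      then show ?thesis unfolding C_def by auto
    qed
    show "C i \<inter> C j = {}"
    proof (cases "i < j")
      case True then show ?thesis using key j by simp
    next
      case False then have "j < i" using ij by simp
      then show ?thesis using key[of j i] i by auto
    qed
  qed
  have Csub: "C i \<subseteq> A" for i unfolding C_def by simp
  show ?thesis by (rule exI[of _ C]) (use Csets Csub Cmeas Cdisj in simp)
qed

lemma sum_Sigma_fst:
  fixes f :: "nat \<Rightarrow> nat \<Rightarrow> real"
  shows "(\<Sum>k\<le>K. \<Sum>i<p k. f k i) = (\<Sum>x\<in>Sigma {..K} (\<lambda>k. {..<p k}). f (fst x) (snd x))"
  by (subst sum.Sigma) (auto simp: split_beta)

lemma simple_bound_n:
  fixes v :: "nat \<Rightarrow> real" and D :: "nat \<Rightarrow> real set" and n :: nat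
  assumes SS: "symmetric_space X N" and D: "\<forall>k\<le>K. D k \<in> sets M01"
    and disj: "disjoint_family_on D {..K}" and v: "\<forall>k\<le>K. v k \<ge> 0"
    and uX: "(\<lambda>t. \<Sum>k\<le>K. v k * indicator (D k) t) \<in> X" and n: "n > 0"
  shows "(\<Sum>k\<le>K. v k * measure M01 (D k)) - (\<Sum>k\<le>K. v k) / n \<le> N (\<lambda>t. \<Sum>k\<le>K. v k * indicator (D k) t)"
proof -
  define u where "u = (\<lambda>t. \<Sum>k\<le>K. v k * indicator (D k) t)"
  define p where "p k = nat \<lfloor>real n * measure M01 (D k)\<rfloor>" for k
  have mnn: "measure M01 A \<ge> 0" for A by simp
  have p_le: "real (p k) \<le> real n * measure M01 (D k)" for k
    unfolding p_def using mnn[of "D k"] by simp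
  have p_ge: "real (p k) \<ge> real n * measure M01 (D k) - 1" for k
    unfolding p_def using mnn[of "D k"] by linarith
  have "\<forall>k. \<exists>Ck. k \<le> K \<longrightarrow> ((\<forall>i<p k. Ck i \<in> sets M01 \<and> Ck i \<subseteq> D k \<and> measure M01 (Ck i) = 1 / n) \<and> disjoint_family_on Ck {..<p k})"
  proof
    fix k show "\<exists>Ck. k \<le> K \<longrightarrow> ((\<forall>i<p k. Ck i \<in> sets M01 \<and> Ck i \<subseteq> D k \<and> measure M01 (Ck i) = 1 / n) \<and> disjoint_family_on Ck {..<p k})"
    proof (cases "k \<le> K")
      case True
      then show ?thesis using partition[OF _ n p_le[of k]] D by blast
    qed auto
  qed
  then have "\<exists>C. \<forall>k. k \<le> K \<longrightarrow> ((\<forall>i<p k. C k i \<in> sets M01 \<and> C k i \<subseteq> D k \<and> measure M01 (C k i) = 1 / n) \<and> disjoint_family_on (C k) {..<p k})"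
    by (rule choice)
  then obtain C where C0: "\<forall>k. k \<le> K \<longrightarrow> ((\<forall>i<p k. C k i \<in> sets M01 \<and> C k i \<subseteq> D k \<and> measure M01 (C k i) = 1 / n) \<and> disjoint_family_on (C k) {..<p k})"
    by (elim exE)
  have Cs: "C k i \<in> sets M01" "C k i \<subseteq> D k" "measure M01 (C k i) = 1 / n" if "k \<le> K" "i < p k" for k i
    using C0 that by auto
  have Cd: "disjoint_family_on (C k) {..<p k}" if "k \<le> K" for k using C0 that by auto
  define J0 where "J0 = Sigma {..K} (\<lambda>k. {..<p k})"
  define c0 where "c0 x = C (fst x) (snd x)" for x
  have J0fin: "finite J0" unfolding J0_def by simp
  have cardJ0: "card J0 = (\<Sum>k\<le>K. p k)" unfolding J0_def by (simp add: card_SigmaI)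
  have c0s: "c0 x \<in> sets M01" "c0 x \<subseteq> D (fst x)" "measure M01 (c0 x) = 1 / n" if x0: "x \<in> J0" for x
  proof -
    obtain k i where x: "x = (k, i)" "k \<le> K" "i < p k" using x0 unfolding J0_def by auto
    show "c0 x \<in> sets M01" "c0 x \<subseteq> D (fst x)" "measure M01 (c0 x) = 1 / n"
      using Cs[OF x(2,3)] x(1) unfolding c0_def by simp_all
  qed
  have c0d: "disjoint_family_on c0 J0"
    unfolding disjoint_family_on_def
  proof (intro ballI impI)
    fix x y assume x: "x \<in> J0" and y: "y \<in> J0" and xy: "x \<noteq> y"
    show "c0 x \<inter> c0 y = {}"
    proof (cases "fst x = fst y")
      case True
      obtain k i where xk: "x = (k, i)" "k \<le> K" "i < p k" using x unfolding J0_def by auto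
      obtain k' i' where yk: "y = (k', i')" "k' \<le> K" "i' < p k'" using y unfolding J0_def by auto
      have kk: "k' = k" using True xk yk by simp
      then have "i \<noteq> i'" using xy xk yk by simp
      then have "C k i \<inter> C k i' = {}" using Cd[OF xk(2)] xk(3) yk(3) kk unfolding disjoint_family_on_def by auto
      then show ?thesis using xk yk kk unfolding c0_def by simp
    next
      case False
      have "fst x \<in> {..K}" "fst y \<in> {..K}" using x y unfolding J0_def by auto
      then have "D (fst x) \<inter> D (fst y) = {}" using disj False unfolding disjoint_family_on_def by blast
      then show ?thesis using c0s(2)[OF x] c0s(2)[OF y] by blast
    qed
  qed
  define W where "W = (\<Union>x\<in>J0. c0 x)"
  have Wsets: "W \<in> sets M01" unfolding W_def using c0s(1) J0fin by auto
  have W01: "W \<subseteq> {0..1}" using Wsets m01_sets by blast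
  have mW: "measure M01 W = card J0 / n"
  proof -
    have "measure M01 W = (\<Sum>x\<in>J0. measure M01 (c0 x))" unfolding W_def
      by (rule measure_finite_Union[OF J0fin]) (use c0s(1) c0d m01_emeasure_fin in auto)
    also have "\<dots> = (\<Sum>x\<in>J0. 1 / n)" using c0s(3) by simp
    finally show ?thesis by simp
  qed
  define P where "P = (\<Sum>k\<le>K. p k)"
  have PleN: "P \<le> n"
  proof -
    have "real P = (\<Sum>k\<le>K. real (p k))" unfolding P_def by simp
    also have "\<dots> \<le> (\<Sum>k\<le>K. real n * measure M01 (D k))" by (rule sum_mono) (rule p_le)
    also have "\<dots> = real n * measure M01 (\<Union>k\<in>{..K}. D k)"
    proof -
      have "measure M01 (\<Union>k\<in>{..K}. D k) = (\<Sum>k\<in>{..K}. measure M01 (D k))"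
        by (rule measure_finite_Union) (use D disj m01_emeasure_fin in auto)
      then show ?thesis by (simp add: sum_distrib_left)
    qed
    also have "\<dots> \<le> real n * 1"
    proof -
      have "measure M01 (\<Union>k\<in>{..K}. D k) \<le> measure M01 (space M01)"
        by (rule finite_measure.bounded_measure[OF m01_fin])
      then have "measure M01 (\<Union>k\<in>{..K}. D k) \<le> 1" using m01_total by simp
      then show ?thesis by (simp add: mult_left_le)
    qed
    finally show ?thesis by simp
  qed
  define L where "L = {0..1} - W"
  have Lsets: "L \<in> sets M01" unfolding L_def using Wsets by auto
  have mL: "measure M01 L = 1 - card J0 / n"
  proof -
    have "measure M01 L = measure M01 {0..1} - measure M01 W" unfolding L_def
      by (rule measure_Diff) (use Wsets W01 m01_emeasure_fin in auto)
    then show ?thesis using mW m01_total by simp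
  qed
  define r where "r = n - P"
  have r_le: "real r \<le> real n * measure M01 L"
    using mL PleN n cardJ0 unfolding r_def P_def by (simp add: of_nat_diff field_simps)
  obtain CL where CL: "\<forall>i<r. CL i \<in> sets M01 \<and> CL i \<subseteq> L \<and> measure M01 (CL i) = 1 / n"
    and CLd: "disjoint_family_on CL {..<r}"
    using partition[OF Lsets n r_le] by blast
  define J1 where "J1 = {Suc K} \<times> {..<r}"
  define J where "J = J0 \<union> J1"
  define cell :: "nat \<times> nat \<Rightarrow> real set" where "cell x = (if fst x \<le> K then c0 x else CL (snd x))" for x
  define w :: "nat \<times> nat \<Rightarrow> real" where "w x = (if fst x \<le> K then v (fst x) else 0)" for x
  have J0K: "fst x \<le> K" if "x \<in> J0" for x using that unfolding J0_def by auto
  have J1K: "fst x = Suc K" "snd x < r" if "x \<in> J1" for x using that unfolding J1_def by auto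
  have J01: "J0 \<inter> J1 = {}" using J0K J1K by fastforce
  have Jfin: "finite J" unfolding J_def J1_def using J0fin by simp
  have cardJ: "card J = n"
  proof -
    have "card J = card J0 + card J1" unfolding J_def
      by (rule card_Un_disjoint) (use J0fin J01 in \<open>auto simp: J1_def\<close>)
    also have "card J1 = r" unfolding J1_def by (simp add: card_cartesian_product)
    finally show ?thesis using cardJ0 PleN unfolding r_def P_def by simp
  qed
  have cell_sets: "\<forall>x\<in>J. cell x \<in> sets M01"
    using c0s(1) CL J0K J1K unfolding J_def cell_def by fastforce
  have cell_meas: "\<forall>x\<in>J. measure M01 (cell x) = 1 / n"
    using c0s(3) CL J0K J1K unfolding J_def cell_def by fastforce
  have cell_J0: "cell x = c0 x" if "x \<in> J0" for x using J0K[OF that] unfolding cell_def by simp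
  have cell_J1: "cell x = CL (snd x)" "cell x \<subseteq> L" if "x \<in> J1" for x
    using J1K[OF that] CL unfolding cell_def by auto
  have cell_disj: "disjoint_family_on cell J"
    unfolding disjoint_family_on_def
  proof (intro ballI impI)
    fix x y assume x: "x \<in> J" and y: "y \<in> J" and xy: "x \<noteq> y"
    have m: "c0 a \<inter> CL (snd b) = {}" if a: "a \<in> J0" and b: "b \<in> J1" for a b
    proof -
      have "c0 a \<subseteq> W" unfolding W_def using a by auto
      moreover have "CL (snd b) \<subseteq> L" using CL J1K[OF b] by auto
      ultimately show ?thesis unfolding L_def by blast
    qed
    show "cell x \<inter> cell y = {}"
    proof (cases "x \<in> J0")
      case xJ0: True
      show ?thesis
      proof (cases "y \<in> J0")
        case True then show ?thesis using c0d xJ0 xy cell_J0 unfolding disjoint_family_on_def by auto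
      next
        case False then have "y \<in> J1" using y unfolding J_def by auto
        then show ?thesis using m[OF xJ0] cell_J0[OF xJ0] cell_J1 by auto
      qed
    next
      case xJ0: False
      then have xJ1: "x \<in> J1" using x unfolding J_def by auto
      show ?thesis
      proof (cases "y \<in> J0")
        case True then show ?thesis using m[OF True xJ1] cell_J0[OF True] cell_J1[OF xJ1] by auto
      next
        case False then have yJ1: "y \<in> J1" using y unfolding J_def by auto
        have "snd x \<noteq> snd y" using xy J1K[OF xJ1] J1K[OF yJ1] by (simp add: prod_eq_iff)
        then show ?thesis using CLd J1K[OF xJ1] J1K[OF yJ1] cell_J1[OF xJ1] cell_J1[OF yJ1]
          unfolding disjoint_family_on_def by auto
      qed
    qed
  qed
  define s where "s = (\<lambda>t. \<Sum>x\<in>J. w x * indicator (cell x) t)"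
  have s_J0: "s t = (\<Sum>x\<in>J0. v (fst x) * indicator (c0 x) t)" for t
  proof -
    have "s t = (\<Sum>x\<in>J0. w x * indicator (cell x) t) + (\<Sum>x\<in>J1. w x * indicator (cell x) t)"
      unfolding s_def J_def by (rule sum.union_disjoint) (use J0fin J01 in \<open>auto simp: J1_def\<close>)
    moreover have "(\<Sum>x\<in>J1. w x * indicator (cell x) t) = 0"
      using J1K unfolding w_def by (intro sum.neutral) auto
    moreover have "(\<Sum>x\<in>J0. w x * indicator (cell x) t) = (\<Sum>x\<in>J0. v (fst x) * indicator (c0 x) t)"
      using J0K cell_J0 unfolding w_def by (intro sum.cong) auto
    ultimately show ?thesis by simp
  qed
  have s_le: "s t \<le> u t" for t
  proof -
    have "s t = (\<Sum>k\<le>K. \<Sum>i<p k. v k * indicator (C k i) t)"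
      unfolding s_J0 J0_def c0_def by (rule sum_Sigma_fst[symmetric])
    also have "\<dots> = (\<Sum>k\<le>K. v k * (\<Sum>i<p k. indicator (C k i) t))" by (simp add: sum_distrib_left)
    also have "\<dots> \<le> (\<Sum>k\<le>K. v k * indicator (D k) t)"
    proof (rule sum_mono)
      fix k assume k: "k \<in> {..K}"
      have "(\<Sum>i<p k. indicator (C k i) t :: real) = indicator (\<Union>i\<in>{..<p k}. C k i) t"
        by (rule indicator_UN_disjoint[symmetric]) (use Cd k in auto)
      also have "\<dots> \<le> (indicator (D k) t :: real)"
        using Cs(2)[of k] k by (auto simp: indicator_def)
      finally show "v k * (\<Sum>i<p k. indicator (C k i) t) \<le> v k * indicator (D k) t"
        using v k by (intro mult_left_mono) auto
    qed
    finally show ?thesis unfolding u_def .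
  qed
  have s_ge: "s t \<ge> 0" for t
    unfolding s_J0 using v J0K by (intro sum_nonneg mult_nonneg_nonneg) auto
  have s_meas: "s \<in> borel_measurable M01"
    unfolding s_def using cell_sets by (intro borel_measurable_sum borel_measurable_times borel_measurable_const borel_measurable_indicator) auto
  have sX: "s \<in> X \<and> N s \<le> N u"
  proof (rule ss_ideal[OF SS uX[folded u_def] s_meas])
    show "AE t in M01. \<bar>s t\<bar> \<le> \<bar>u t\<bar>" using s_le s_ge by (intro AE_I2) (metis abs_of_nonneg order_trans abs_ge_self)
  qed
  have core: "\<bar>\<Sum>x\<in>J. w x\<bar> \<le> n * N s"
    unfolding s_def by (rule core_J[OF SS Jfin cardJ n cell_sets cell_disj cell_meas]) (use sX s_def in simp)
  have sumw: "(\<Sum>x\<in>J. w x) = (\<Sum>k\<le>K. real (p k) * v k)"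
  proof -
    have "(\<Sum>x\<in>J. w x) = (\<Sum>x\<in>J0. w x) + (\<Sum>x\<in>J1. w x)"
      unfolding J_def by (rule sum.union_disjoint) (use J0fin J01 in \<open>auto simp: J1_def\<close>)
    moreover have "(\<Sum>x\<in>J1. w x) = 0" using J1K unfolding w_def by (intro sum.neutral) auto
    moreover have "(\<Sum>x\<in>J0. w x) = (\<Sum>k\<le>K. \<Sum>i<p k. v k)"
      unfolding J0_def using sum_Sigma_fst[of "\<lambda>k i. v k" p K] by (auto simp: w_def intro!: sum.cong)
    ultimately show ?thesis by simp
  qed
  have "(\<Sum>k\<le>K. v k * (real n * measure M01 (D k) - 1)) \<le> (\<Sum>k\<le>K. real (p k) * v k)"
    by (rule sum_mono) (use v p_ge in \<open>auto simp: mult.commute intro: mult_left_mono\<close>)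
  also have "\<dots> \<le> n * N s" using core sumw by simp
  also have "\<dots> \<le> n * N u" using sX by (simp add: mult_left_mono)
  finally have "(\<Sum>k\<le>K. v k * (real n * measure M01 (D k) - 1)) \<le> n * N u" .
  moreover have "(\<Sum>k\<le>K. v k * (real n * measure M01 (D k) - 1)) = real n * ((\<Sum>k\<le>K. v k * measure M01 (D k)) - (\<Sum>k\<le>K. v k) / n)"
    using n by (simp add: sum_subtractf sum_distrib_left right_diff_distrib field_simps)
  ultimately have "real n * ((\<Sum>k\<le>K. v k * measure M01 (D k)) - (\<Sum>k\<le>K. v k) / n) \<le> real n * N u" by simp
  then show ?thesis using n unfolding u_def by simp
qed

lemma simple_bound:
  fixes v :: "nat \<Rightarrow> real" and D :: "nat \<Rightarrow> real set"
  assumes SS: "symmetric_space X N" and D: "\<forall>k\<le>K. D k \<in> sets M01"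
    and disj: "disjoint_family_on D {..K}" and v: "\<forall>k\<le>K. v k \<ge> 0"
    and uX: "(\<lambda>t. \<Sum>k\<le>K. v k * indicator (D k) t) \<in> X"
  shows "(\<Sum>k\<le>K. v k * measure M01 (D k)) \<le> N (\<lambda>t. \<Sum>k\<le>K. v k * indicator (D k) t)"
proof (rule ccontr)
  let ?a = "\<Sum>k\<le>K. v k * measure M01 (D k)" and ?b = "N (\<lambda>t. \<Sum>k\<le>K. v k * indicator (D k) t)"
  let ?V = "\<Sum>k\<le>K. v k"
  assume "\<not> ?a \<le> ?b"
  then have d: "?a - ?b > 0" by simp
  have V: "?V \<ge> 0" using v by (intro sum_nonneg) auto
  obtain n :: nat where nb: "?V / (?a - ?b) < real n" using reals_Archimedean2 by blast
  have "?V / (?a - ?b) \<ge> 0" using V d by simp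
  then have "real n > 0" using nb by linarith
  then have n: "n > 0" by simp
  have "?V < real n * (?a - ?b)" using nb d by (simp add: divide_less_eq mult.commute)
  then have "?V / n < ?a - ?b" using n by (simp add: divide_less_eq mult.commute)
  moreover have "?a - ?V / n \<le> ?b" by (rule simple_bound_n[OF SS D disj v uX n])
  ultimately show False by simp
qed

lemma level_sets:
  fixes y :: "real \<Rightarrow> real" and m K :: nat
  assumes y: "y \<in> borel_measurable M01"
  shows "{t \<in> {0..1}. real k / real m \<le> y t \<and> (k < K \<longrightarrow> y t < (real k + 1) / real m)} \<in> sets M01"
proof -
  have "{t \<in> space M01. real k / real m \<le> y t \<and> (k < K \<longrightarrow> y t < (real k + 1) / real m)} \<in> sets M01"
    using y by measurable
  then show ?thesis by simp
qed

lemma L_nonneg: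
  assumes SS: "symmetric_space X N" and yX: "y \<in> X" and ynn: "\<forall>t. y t \<ge> 0"
  shows "integrable M01 y \<and> integral\<^sup>L M01 y \<le> N y"
proof -
  have ym: "y \<in> borel_measurable M01" by (rule ss_meas[OF SS yX])
  define Km where "Km m = Suc m * Suc m" for m :: nat
  define D where "D m k = {t \<in> {0..1}. real k / real (Suc m) \<le> y t \<and> (k < Km m \<longrightarrow> y t < (real k + 1) / real (Suc m))}" for m k :: nat
  define v where "v m k = real k / real (Suc m)" for m k :: nat
  define u where "u m t = (\<Sum>k\<le>Km m. v m k * indicator (D m k) t)" for m t
  have Dsets: "\<forall>k\<le>Km m. D m k \<in> sets M01" for m unfolding D_def using level_sets[OF ym] by blast
  have Dsets': "D m k \<in> sets M01" for m k unfolding D_def using level_sets[OF ym] by blast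
  have vnn: "\<forall>k\<le>Km m. v m k \<ge> 0" for m unfolding v_def by simp
  have Ddisj: "disjoint_family_on (D m) {..Km m}" for m
    unfolding disjoint_family_on_def
  proof (intro ballI impI)
    fix a b assume a: "a \<in> {..Km m}" and b: "b \<in> {..Km m}" and ab: "a \<noteq> b"
    have key: "D m i \<inter> D m j = {}" if ij: "i < j" "j \<le> Km m" for i j
    proof -
      have "real (Suc i) / real (Suc m) \<le> real j / real (Suc m)" using ij by (simp add: divide_right_mono)
      then show ?thesis using ij unfolding D_def by (auto simp: add.commute)
    qed
    show "D m a \<inter> D m b = {}"
    proof (cases "a < b")
      case True then show ?thesis using key b by simp
    next
      case False then have "b < a" using ab by simp
      then show ?thesis using key[of b a] a by auto
    qed
  qed
  have uval: "u m t = v m k" if "k \<le> Km m" "t \<in> D m k" for m k t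
    unfolding u_def by (rule sum_indicator_disjoint_family[OF Ddisj]) (use that in auto)
  have u0: "u m t = 0" if "\<forall>k\<le>Km m. t \<notin> D m k" for m t
    unfolding u_def using that by (intro sum.neutral) auto
  have ubnd: "0 \<le> u m t \<and> u m t \<le> y t" for m t
  proof (cases "\<exists>k\<le>Km m. t \<in> D m k")
    case True
    then obtain k where k: "k \<le> Km m" "t \<in> D m k" by blast
    then show ?thesis using uval[OF k] unfolding D_def v_def by auto
  next
    case False then show ?thesis using u0[of m t] ynn by auto
  qed
  have umeas: "u m \<in> borel_measurable M01" for m
    unfolding u_def using Dsets' by (intro borel_measurable_sum borel_measurable_times borel_measurable_const borel_measurable_indicator) auto
  have uX: "u m \<in> X \<and> N (u m) \<le> N y" for m
  proof (rule ss_ideal[OF SS yX umeas], rule AE_I2)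
    fix t show "\<bar>u m t\<bar> \<le> \<bar>y t\<bar>" using ubnd[of m t] by simp
  qed
  have iint: "integrable M01 (\<lambda>t. v m k * indicator (D m k) t)" for m k
  proof (rule integrable_mult_right)
    show "integrable M01 (indicator (D m k) :: real \<Rightarrow> real)"
      by (rule integrable_real_indicator[OF Dsets']) (use m01_emeasure_fin in \<open>simp add: less_top\<close>)
  qed
  have uint: "integrable M01 (u m)" for m
  proof -
    have "integrable M01 (\<lambda>t. \<Sum>k\<in>{..Km m}. v m k * indicator (D m k) t)"
      using Bochner_Integration.integrable_sum[where I="{..Km m}" and M=M01 and f="\<lambda>k t. v m k * indicator (D m k) t"] iint by blast
    moreover have "u m = (\<lambda>t. \<Sum>k\<in>{..Km m}. v m k * indicator (D m k) t)" using u_def by auto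
    ultimately show ?thesis by simp
  qed
  have uintegral: "integral\<^sup>L M01 (u m) = (\<Sum>k\<le>Km m. v m k * measure M01 (D m k))" for m
  proof -
    have "integral\<^sup>L M01 (u m) = (\<Sum>k\<le>Km m. integral\<^sup>L M01 (\<lambda>t. v m k * indicator (D m k) t))"
    proof -
      have e: "u m = (\<lambda>t. \<Sum>k\<in>{..Km m}. v m k * indicator (D m k) t)" using u_def by auto
      have "integral\<^sup>L M01 (\<lambda>t. \<Sum>k\<in>{..Km m}. v m k * indicator (D m k) t) = (\<Sum>k\<le>Km m. integral\<^sup>L M01 (\<lambda>t. v m k * indicator (D m k) t))"
        by (rule Bochner_Integration.integral_sum) (rule iint)
      then show ?thesis by (simp only: e)
    qed
    also have "\<dots> = (\<Sum>k\<le>Km m. v m k * measure M01 (D m k))"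
    proof (rule sum.cong)
      fix k assume "k \<in> {..Km m}"
      have "D m k \<inter> space M01 = D m k" unfolding D_def by auto
      then show "integral\<^sup>L M01 (\<lambda>t. v m k * indicator (D m k) t) = v m k * measure M01 (D m k)"
        by simp
    qed simp
    finally show ?thesis .
  qed
  have ule: "integral\<^sup>L M01 (u m) \<le> N y" for m
  proof -
    have e: "u m = (\<lambda>t. \<Sum>k\<le>Km m. v m k * indicator (D m k) t)" by (rule ext) (simp only: u_def)
    have uXl: "(\<lambda>t. \<Sum>k\<le>Km m. v m k * indicator (D m k) t) \<in> X"
      using conjunct1[OF uX[of m]] unfolding e .
    have "integral\<^sup>L M01 (u m) \<le> N (u m)"
      unfolding uintegral unfolding e
      by (rule simple_bound[OF SS Dsets Ddisj vnn uXl])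
    then show ?thesis using uX[of m] by simp
  qed
  have conv: "(\<lambda>m. u m t) \<longlonglongrightarrow> y t" if t: "t \<in> {0..1}" for t
  proof (rule tendsto_sandwich[of "\<lambda>m. y t - 1 / real (Suc m)" _ _ "\<lambda>m. y t"])
    show "\<forall>\<^sub>F m in sequentially. u m t \<le> y t" using ubnd by simp
    show "(\<lambda>m. y t) \<longlonglongrightarrow> y t" by simp
    show "(\<lambda>m. y t - 1 / real (Suc m)) \<longlonglongrightarrow> y t"
      using tendsto_diff[OF tendsto_const LIMSEQ_inverse_real_of_nat, of "y t"] by (simp add: inverse_eq_divide)
    obtain M :: nat where M: "y t < real M" using reals_Archimedean2 by blast
    show "\<forall>\<^sub>F m in sequentially. y t - 1 / real (Suc m) \<le> u m t"
      unfolding eventually_sequentially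
    proof (intro exI allI impI)
      fix m assume mM: "M \<le> m"
      define k where "k = nat \<lfloor>real (Suc m) * y t\<rfloor>"
      have sp: "real (Suc m) > 0" by simp
      have yt0: "y t \<ge> 0" using ynn by simp
      have kle: "real k \<le> real (Suc m) * y t" unfolding k_def using yt0 by simp
      have kgt: "real (Suc m) * y t < real k + 1" unfolding k_def using yt0 by linarith
      have ytm: "y t < real (Suc m)" using M mM by simp
      have "real k < real (Km m)"
      proof -
        have a: "real (Suc m) * y t < real (Suc m) * real (Suc m)" by (rule mult_strict_left_mono[OF ytm sp])
        have "real (Km m) = real (Suc m) * real (Suc m)" unfolding Km_def by (simp only: of_nat_mult)
        then show ?thesis using kle a by linarith
      qed
      then have kK: "k < Km m" by simp
      have k1: "real k / real (Suc m) \<le> y t" using kle sp by (simp add: divide_le_eq mult.commute)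
      have k2: "y t < (real k + 1) / real (Suc m)" using kgt sp by (simp add: less_divide_eq mult.commute)
      have tD: "t \<in> D m k" unfolding D_def using t k1 k2 kK by simp
      have "u m t = real k / real (Suc m)" using uval[of k m t] kK tD unfolding v_def by simp
      moreover have "y t - 1 / real (Suc m) \<le> real k / real (Suc m)"
      proof -
        have "(real k + 1) / real (Suc m) = real k / real (Suc m) + 1 / real (Suc m)"
          by (rule add_divide_distrib)
        then show ?thesis using k2 by linarith
      qed
      ultimately show "y t - 1 / real (Suc m) \<le> u m t" by simp
    qed
  qed
  have nn_y: "(\<integral>\<^sup>+ t. ennreal (y t) \<partial>M01) \<le> ennreal (N y)"
  proof -
    have "(\<integral>\<^sup>+ t. ennreal (y t) \<partial>M01) = (\<integral>\<^sup>+ t. liminf (\<lambda>m. ennreal (u m t)) \<partial>M01)"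
    proof (rule nn_integral_cong)
      fix t assume "t \<in> space M01"
      then have "(\<lambda>m. ennreal (u m t)) \<longlonglongrightarrow> ennreal (y t)" using conv by simp
      then show "ennreal (y t) = liminf (\<lambda>m. ennreal (u m t))" by (simp add: lim_imp_Liminf)
    qed
    also have "\<dots> \<le> liminf (\<lambda>m. \<integral>\<^sup>+ t. ennreal (u m t) \<partial>M01)"
      by (rule nn_integral_liminf) (use umeas in simp)
    also have "\<dots> \<le> limsup (\<lambda>m. \<integral>\<^sup>+ t. ennreal (u m t) \<partial>M01)"
      by (rule Liminf_le_Limsup) simp
    also have "\<dots> \<le> ennreal (N y)"
    proof (rule Limsup_bounded, rule always_eventually, rule allI)
      fix m
      have "(\<integral>\<^sup>+ t. ennreal (u m t) \<partial>M01) = ennreal (integral\<^sup>L M01 (u m))"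
        by (rule nn_integral_eq_integral[OF uint]) (use ubnd in simp)
      then show "(\<integral>\<^sup>+ t. ennreal (u m t) \<partial>M01) \<le> ennreal (N y)" using ule[of m] by (simp add: ennreal_leI)
    qed
    finally show ?thesis .
  qed
  have yint: "integrable M01 y"
    by (rule integrableI_nonneg[OF ym]) (use ynn nn_y in \<open>auto simp: le_less_trans[OF _ ennreal_less_top]\<close>)
  have "integral\<^sup>L M01 y = enn2real (\<integral>\<^sup>+ t. ennreal (y t) \<partial>M01)"
    by (rule integral_eq_nn_integral[OF ym]) (use ynn in simp)
  also have "\<dots> \<le> enn2real (ennreal (N y))"
    by (rule enn2real_mono[OF nn_y]) simp
  also have "\<dots> = N y" using ss_nonneg[OF SS yX] by simp
  finally show ?thesis using yint by simp
qed

lemma L_int: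
  assumes SS: "symmetric_space X N" and xX: "x \<in> X"
  shows "integrable M01 x \<and> \<bar>integral\<^sup>L M01 x\<bar> \<le> N x"
proof -
  have xm: "x \<in> borel_measurable M01" by (rule ss_meas[OF SS xX])
  define y where "y = (\<lambda>t. \<bar>x t\<bar>)"
  have ym: "y \<in> borel_measurable M01" unfolding y_def using xm by simp
  have yX: "y \<in> X \<and> N y \<le> N x" by (rule ss_ideal[OF SS xX ym]) (simp add: y_def)
  have "N x \<le> N y" using ss_ideal[OF SS conjunct1[OF yX] xm] by (simp add: y_def)
  have L: "integrable M01 y \<and> integral\<^sup>L M01 y \<le> N y"
    by (rule L_nonneg[OF SS conjunct1[OF yX]]) (simp add: y_def)
  have xi: "integrable M01 x" using L integrable_abs_iff[OF xm] unfolding y_def by simp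
  have "\<bar>integral\<^sup>L M01 x\<bar> \<le> integral\<^sup>L M01 y" unfolding y_def by (rule integral_abs_bound)
  with L yX xi show ?thesis by simp
qed

lemma int_const: "integral\<^sup>L M01 (\<lambda>_. c) = (c::real)"
proof -
  have "integral\<^sup>L M01 (\<lambda>_. c) = measure M01 (space M01) *\<^sub>R c" by (rule Bochner_Integration.lebesgue_integral_const)
  then show ?thesis using m01_total by simp
qed

lemma dual_norm_le:
  assumes SS: "symmetric_space X N" and bf: "bounded_functional X N \<phi>" and dn: "dual_norm X N \<phi> = 1"
    and xX: "x \<in> X"
  shows "\<bar>\<phi> x\<bar> \<le> N x"
proof -
  obtain C where C: "\<forall>x\<in>X. \<bar>\<phi> x\<bar> \<le> C * N x" using bf unfolding bounded_functional_def by blast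
  have hom: "\<forall>x\<in>X. \<forall>c. \<phi> (\<lambda>t. c * x t) = c * \<phi> x" using bf unfolding bounded_functional_def by blast
  let ?S = "{\<bar>\<phi> x\<bar> | x. x \<in> X \<and> N x \<le> 1}"
  have bdd: "bdd_above ?S"
  proof (rule bdd_aboveI)
    fix a assume "a \<in> ?S"
    then obtain z where z: "a = \<bar>\<phi> z\<bar>" "z \<in> X" "N z \<le> 1" by blast
    have "\<bar>\<phi> z\<bar> \<le> C * N z" using C z by blast
    also have "\<dots> \<le> max C 0 * N z" using ss_nonneg[OF SS z(2)] by (intro mult_right_mono) auto
    also have "\<dots> \<le> max C 0 * 1" using z(3) by (intro mult_left_mono) auto
    finally show "a \<le> max C 0" using z by simp
  qed
  show ?thesis
  proof (cases "N x = 0")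
    case True
    then show ?thesis using C xX by fastforce
  next
    case False
    then have Np: "N x > 0" using ss_nonneg[OF SS xX] by simp
    define z where "z = (\<lambda>t. (1 / N x) * x t)"
    have zX: "z \<in> X" unfolding z_def by (rule ss_smult[OF SS xX])
    have Nz: "N z = 1" unfolding z_def using ss_Nsmult[OF SS xX, of "1 / N x"] Np by simp
    have "\<bar>\<phi> z\<bar> \<in> ?S" using zX Nz by auto
    then have "\<bar>\<phi> z\<bar> \<le> Sup ?S" by (rule cSup_upper[OF _ bdd])
    then have "\<bar>\<phi> z\<bar> \<le> 1" using dn unfolding dual_norm_def by simp
    moreover have "\<phi> z = (1 / N x) * \<phi> x" unfolding z_def using hom xX by blast
    ultimately have "\<bar>\<phi> x\<bar> / N x \<le> 1" using Np by (simp add: abs_mult)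
    then show ?thesis using Np by (simp add: divide_le_eq)
  qed
qed

lemma dual_norm_one:
  assumes SS: "symmetric_space X N" and b: "\<forall>x\<in>X. \<bar>\<phi> x\<bar> \<le> N x" and one: "\<phi> (\<lambda>_. 1) = 1"
  shows "dual_norm X N \<phi> = 1"
  unfolding dual_norm_def
proof (rule cSup_eq_maximum)
  show "1 \<in> {\<bar>\<phi> x\<bar> | x. x \<in> X \<and> N x \<le> 1}"
    using ss_one[OF SS] ss_None[OF SS] one by force
  fix a assume "a \<in> {\<bar>\<phi> x\<bar> | x. x \<in> X \<and> N x \<le> 1}"
  then obtain z where z: "a = \<bar>\<phi> z\<bar>" "z \<in> X" "N z \<le> 1" by blast
  then show "a \<le> 1" using b by force
qed

lemma int_norming:
  assumes SS: "symmetric_space X N"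
  shows "bounded_functional X N (integral\<^sup>L M01) \<and> dual_norm X N (integral\<^sup>L M01) = 1 \<and> integral\<^sup>L M01 (\<lambda>_. 1::real) = 1"
proof -
  have b: "\<forall>x\<in>X. \<bar>integral\<^sup>L M01 x\<bar> \<le> N x" using L_int[OF SS] by blast
  have bf: "bounded_functional X N (integral\<^sup>L M01)"
    unfolding bounded_functional_def
  proof (intro conjI ballI allI)
    fix x y assume x: "x \<in> X" and y: "y \<in> X"
    show "integral\<^sup>L M01 (\<lambda>t. x t + y t) = integral\<^sup>L M01 x + integral\<^sup>L M01 y"
      using L_int[OF SS x] L_int[OF SS y] by simp
  next
    fix x and c :: real assume x: "x \<in> X"
    show "integral\<^sup>L M01 (\<lambda>t. c * x t) = c * integral\<^sup>L M01 x" by simp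
  next
    show "\<exists>C. \<forall>x\<in>X. \<bar>integral\<^sup>L M01 x\<bar> \<le> C * N x" using b by (intro exI[of _ 1]) simp
  qed
  have one: "integral\<^sup>L M01 (\<lambda>_. 1::real) = 1" by (rule int_const)
  show ?thesis using bf dual_norm_one[OF SS b one] one by simp
qed

lemma norming_eq_int:
  assumes SS: "symmetric_space X N"
    and A: "\<forall>f\<in>X. integral\<^sup>L M01 f \<noteq> 0 \<longrightarrow> (\<exists>c0::real. N (\<lambda>t. 1 - c0 * f t) < 1)"
    and bf: "bounded_functional X N \<phi>" and dn: "dual_norm X N \<phi> = 1" and one: "\<phi> (\<lambda>_. 1) = 1"
    and fX: "f \<in> X"
  shows "\<phi> f = integral\<^sup>L M01 f"
proof -
  have ladd: "\<phi> (\<lambda>t. x t + y t) = \<phi> x + \<phi> y" if "x \<in> X" "y \<in> X" for x y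
    using bf that unfolding bounded_functional_def by blast
  have lhom: "\<phi> (\<lambda>t. c * x t) = c * \<phi> x" if "x \<in> X" for x c
    using bf that unfolding bounded_functional_def by blast
  have lconst: "\<phi> (\<lambda>_. c) = c" for c
    using lhom[OF ss_one[OF SS], of c] one by simp
  define a where "a = \<phi> f"
  define g where "g = (\<lambda>t. f t + - a)"
  have cX: "(\<lambda>_. - a) \<in> X" using ss_const[OF SS] by blast
  have gX: "g \<in> X" unfolding g_def using ss_add[OF SS fX cX] by simp
  have phig: "\<phi> g = 0" unfolding g_def using ladd[OF fX cX] lconst[of "- a"] a_def by simp
  have fint: "integrable M01 f" using L_int[OF SS fX] by simp
  have intg: "integral\<^sup>L M01 g = integral\<^sup>L M01 f - a"
  proof -
    have "integral\<^sup>L M01 g = integral\<^sup>L M01 f + integral\<^sup>L M01 (\<lambda>_. - a)"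
      unfolding g_def by (rule Bochner_Integration.integral_add[OF fint]) simp
    then show ?thesis using int_const[of "- a"] by simp
  qed
  have "integral\<^sup>L M01 g = 0"
  proof (rule ccontr)
    assume "integral\<^sup>L M01 g \<noteq> 0"
    then obtain c0 where c0: "N (\<lambda>t. 1 - c0 * g t) < 1" using A gX by blast
    have e: "(\<lambda>t. 1 - c0 * g t) = (\<lambda>t. (\<lambda>_. 1) t + (- c0) * g t)" by simp
    have gX': "(\<lambda>t. (- c0) * g t) \<in> X" by (rule ss_smult[OF SS gX])
    have hX: "(\<lambda>t. 1 - c0 * g t) \<in> X" unfolding e using ss_add[OF SS ss_one[OF SS] gX'] by simp
    have "\<phi> (\<lambda>t. 1 - c0 * g t) = \<phi> (\<lambda>_. 1) + \<phi> (\<lambda>t. (- c0) * g t)"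
      unfolding e by (rule ladd[OF ss_one[OF SS] gX'])
    also have "\<dots> = 1" using one lhom[OF gX, of "- c0"] phig by simp
    finally have "\<phi> (\<lambda>t. 1 - c0 * g t) = 1" .
    moreover have "\<bar>\<phi> (\<lambda>t. 1 - c0 * g t)\<bar> \<le> N (\<lambda>t. 1 - c0 * g t)"
      by (rule dual_norm_le[OF SS bf dn hX])
    ultimately show False using c0 by simp
  qed
  then show ?thesis using intg a_def by simp
qed

lemma uniqAB:
  assumes SS: "symmetric_space X N"
    and A: "\<forall>f\<in>X. integral\<^sup>L M01 f \<noteq> 0 \<longrightarrow> (\<exists>c0::real. N (\<lambda>t. 1 - c0 * f t) < 1)"
    and H: "bounded_functional X N \<phi> \<and> dual_norm X N \<phi> = 1 \<and> \<phi> (\<lambda>_. 1) = 1 \<and>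
             bounded_functional X N \<psi> \<and> dual_norm X N \<psi> = 1 \<and> \<psi> (\<lambda>_. 1) = 1"
  shows "\<forall>x\<in>X. \<phi> x = \<psi> x"
proof
  fix x assume x: "x \<in> X"
  from H have h1: "bounded_functional X N \<phi>" "dual_norm X N \<phi> = 1" "\<phi> (\<lambda>_. 1) = 1"
    and h2: "bounded_functional X N \<psi>" "dual_norm X N \<psi> = 1" "\<psi> (\<lambda>_. 1) = 1" by auto
  have a: "\<phi> x = integral\<^sup>L M01 x" by (rule norming_eq_int[OF SS A h1 x])
  have b: "\<psi> x = integral\<^sup>L M01 x" by (rule norming_eq_int[OF SS A h2 x])
  show "\<phi> x = \<psi> x" using a b by simp
qed

lemma dirAB:
  assumes SS: "symmetric_space X N"
    and A: "\<forall>f\<in>X. integral\<^sup>L M01 f \<noteq> 0 \<longrightarrow> (\<exists>c0::real. N (\<lambda>t. 1 - c0 * f t) < 1)"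
  shows "smooth_at X N (\<lambda>_. 1)"
  unfolding smooth_at_def
proof (intro conjI)
  show "(\<lambda>_. 1) \<in> X" by (rule ss_one[OF SS])
  show "N (\<lambda>_. 1) = 1" by (rule ss_None[OF SS])
  show "\<exists>\<phi>. bounded_functional X N \<phi> \<and> dual_norm X N \<phi> = 1 \<and> \<phi> (\<lambda>_. 1) = 1"
    by (rule exI[of _ "integral\<^sup>L M01"]) (rule int_norming[OF SS])
  show "\<forall>\<phi> \<psi>. bounded_functional X N \<phi> \<and> dual_norm X N \<phi> = 1 \<and> \<phi> (\<lambda>_. 1) = 1 \<and>
             bounded_functional X N \<psi> \<and> dual_norm X N \<psi> = 1 \<and> \<psi> (\<lambda>_. 1) = 1
             \<longrightarrow> (\<forall>x\<in>X. \<phi> x = \<psi> x)"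
    by (intro allI impI) (rule uniqAB[OF SS A])
qed

definition pq :: "((real \<Rightarrow> real) \<Rightarrow> real) \<Rightarrow> (real \<Rightarrow> real) \<Rightarrow> (real \<Rightarrow> real) \<Rightarrow> real" where
  "pq N f x = (INF s. N (\<lambda>t. x t + s * f t))"

lemma pq_mem: assumes SS: "symmetric_space X N" and fX: "f \<in> X" and xX: "x \<in> X"
  shows "(\<lambda>t. x t + s * f t) \<in> X"
  by (rule ss_add[OF SS xX ss_smult[OF SS fX]])

lemma pq_bdd: assumes SS: "symmetric_space X N" and fX: "f \<in> X" and xX: "x \<in> X"
  shows "bdd_below (range (\<lambda>s. N (\<lambda>t. x t + s * f t)))"
  using ss_nonneg[OF SS pq_mem[OF SS fX xX]] by (intro bdd_belowI[where m=0]) auto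

lemma pq_le: assumes SS: "symmetric_space X N" and fX: "f \<in> X" and xX: "x \<in> X"
  shows "pq N f x \<le> N (\<lambda>t. x t + s * f t)"
  unfolding pq_def by (rule cINF_lower[OF pq_bdd[OF SS fX xX]]) simp

lemma pq_ge: assumes "\<And>s. c \<le> N (\<lambda>t. x t + s * f t)"
  shows "c \<le> pq N f x"
  unfolding pq_def by (rule cINF_greatest) (use assms in auto)

lemma pq_subl:
  assumes SS: "symmetric_space X N" and fX: "f \<in> X"
  shows "subl X N (pq N f)"
  unfolding subl_def
proof (intro conjI ballI allI impI)
  fix x y assume x: "x \<in> X" and y: "y \<in> X"
  have xy: "(\<lambda>t. x t + y t) \<in> X" by (rule ss_add[OF SS x y])
  have key: "pq N f (\<lambda>t. x t + y t) \<le> N (\<lambda>t. x t + s1 * f t) + N (\<lambda>t. y t + s2 * f t)" for s1 s2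
  proof -
    have "pq N f (\<lambda>t. x t + y t) \<le> N (\<lambda>t. (x t + y t) + (s1 + s2) * f t)"
      by (rule pq_le[OF SS fX xy])
    also have "(\<lambda>t. (x t + y t) + (s1 + s2) * f t) = (\<lambda>t. (x t + s1 * f t) + (y t + s2 * f t))"
      by (auto simp: algebra_simps)
    also have "N \<dots> \<le> N (\<lambda>t. x t + s1 * f t) + N (\<lambda>t. y t + s2 * f t)"
      by (rule ss_tri[OF SS pq_mem[OF SS fX x] pq_mem[OF SS fX y]])
    finally show ?thesis .
  qed
  have "pq N f (\<lambda>t. x t + y t) - N (\<lambda>t. x t + s1 * f t) \<le> pq N f y" for s1
  proof (rule pq_ge)
    fix s2 show "pq N f (\<lambda>t. x t + y t) - N (\<lambda>t. x t + s1 * f t) \<le> N (\<lambda>t. y t + s2 * f t)"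
      using key[of s1 s2] by linarith
  qed
  then have "pq N f (\<lambda>t. x t + y t) - pq N f y \<le> pq N f x"
    by (intro pq_ge) (simp add: algebra_simps)
  then show "pq N f (\<lambda>t. x t + y t) \<le> pq N f x + pq N f y" by simp
next
  fix x and c :: real assume x: "x \<in> X" and c: "c \<ge> 0"
  have cx: "(\<lambda>t. c * x t) \<in> X" by (rule ss_smult[OF SS x])
  show "pq N f (\<lambda>t. c * x t) = c * pq N f x"
  proof (cases "c = 0")
    case True
    have "pq N f (\<lambda>t. c * x t) \<le> N (\<lambda>t. c * x t + 0 * f t)" by (rule pq_le[OF SS fX cx])
    then have le: "pq N f (\<lambda>t. c * x t) \<le> 0" using True ss_N_zero[OF SS] by simp
    have "0 \<le> pq N f (\<lambda>t. c * x t)"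
      by (rule pq_ge) (rule ss_nonneg[OF SS pq_mem[OF SS fX cx]])
    then show ?thesis using le True by simp
  next
    case False
    then have cp: "c > 0" using c by simp
    have hom: "N (\<lambda>t. c * x t + (c * s) * f t) = c * N (\<lambda>t. x t + s * f t)" for s
    proof -
      have e: "(\<lambda>t. c * x t + (c * s) * f t) = (\<lambda>t. c * (x t + s * f t))" by (auto simp: algebra_simps)
      have "N (\<lambda>t. c * (x t + s * f t)) = \<bar>c\<bar> * N (\<lambda>t. x t + s * f t)"
        by (rule ss_Nsmult[OF SS pq_mem[OF SS fX x]])
      then show ?thesis using cp by (simp only: e)
    qed
    have le1: "pq N f (\<lambda>t. c * x t) / c \<le> pq N f x"
    proof (rule pq_ge)
      fix s
      have "pq N f (\<lambda>t. c * x t) \<le> N (\<lambda>t. c * x t + (c * s) * f t)" by (rule pq_le[OF SS fX cx])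
      also have "\<dots> = c * N (\<lambda>t. x t + s * f t)" by (rule hom)
      finally show "pq N f (\<lambda>t. c * x t) / c \<le> N (\<lambda>t. x t + s * f t)"
        using cp by (simp add: divide_le_eq mult.commute)
    qed
    have le2: "c * pq N f x \<le> pq N f (\<lambda>t. c * x t)"
    proof (rule pq_ge)
      fix s
      have "pq N f x \<le> N (\<lambda>t. x t + (s / c) * f t)" by (rule pq_le[OF SS fX x])
      then have "c * pq N f x \<le> c * N (\<lambda>t. x t + (s / c) * f t)" using cp by simp
      also have "\<dots> = N (\<lambda>t. c * x t + (c * (s / c)) * f t)" by (rule hom[symmetric])
      also have "(c * (s / c)) = s" using cp by simp
      finally show "c * pq N f x \<le> N (\<lambda>t. c * x t + s * f t)" .
    qed
    from le1 le2 cp show ?thesis by (simp add: divide_le_eq mult.commute antisym)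
  qed
next
  fix x assume x: "x \<in> X"
  show "pq N f x \<le> N x" using pq_le[OF SS fX x, of 0] by simp
qed

lemma dirBA:
  assumes SS: "symmetric_space X N" and sep: "separable_space X N" and sm: "smooth_at X N (\<lambda>_. 1)"
  shows "\<forall>f\<in>X. integral\<^sup>L M01 f \<noteq> 0 \<longrightarrow> (\<exists>c0::real. N (\<lambda>t. 1 - c0 * f t) < 1)"
proof (intro ballI impI)
  fix f assume fX: "f \<in> X" and nz: "integral\<^sup>L M01 f \<noteq> 0"
  show "\<exists>c0::real. N (\<lambda>t. 1 - c0 * f t) < 1"
  proof (rule ccontr)
    assume neg: "\<not> (\<exists>c0::real. N (\<lambda>t. 1 - c0 * f t) < 1)"
    then have ge: "1 \<le> N (\<lambda>t. 1 - c0 * f t)" for c0 by (simp add: not_less)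
    define p where "p = pq N f"
    have P: "subl X N p" unfolding p_def by (rule pq_subl[OF SS fX])
    have p1: "p (\<lambda>_. 1) = 1"
    proof (rule antisym)
      have "p (\<lambda>_. 1) \<le> N (\<lambda>t. (\<lambda>_. 1) t + 0 * f t)" unfolding p_def by (rule pq_le[OF SS fX ss_one[OF SS]])
      then show "p (\<lambda>_. 1) \<le> 1" using ss_None[OF SS] by simp
      show "1 \<le> p (\<lambda>_. 1)" unfolding p_def
      proof (rule pq_ge)
        fix s :: real
        have "(\<lambda>t. 1 - (- s) * f t) = (\<lambda>t. (\<lambda>_. 1) t + s * f t)" by simp
        then show "1 \<le> N (\<lambda>t. (\<lambda>_. 1) t + s * f t)" using ge[of "- s"] by simp
      qed
    qed
    have pf: "p f \<le> 0"
    proof -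
      have "p f \<le> N (\<lambda>t. f t + (-1) * f t)" unfolding p_def by (rule pq_le[OF SS fX fX])
      then show ?thesis using ss_N_zero[OF SS] by simp
    qed
    have pnf: "p (\<lambda>t. - f t) \<le> 0"
    proof -
      have "p (\<lambda>t. - f t) \<le> N (\<lambda>t. - f t + 1 * f t)" unfolding p_def by (rule pq_le[OF SS fX ss_neg[OF SS fX]])
      then show ?thesis using ss_N_zero[OF SS] by simp
    qed
    obtain D where Dc: "countable D" and DX: "D \<subseteq> X" and Dd: "\<forall>x\<in>X. \<forall>e>0. \<exists>d\<in>D. N (\<lambda>t. x t - d t) < e"
      using sep unfolding separable_space_def by blast
    have "\<exists>d\<in>D. N (\<lambda>t. (\<lambda>_. 1) t - d t) < 1" using Dd ss_one[OF SS] by (meson zero_less_one)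
    then have Dne: "D \<noteq> {}" by blast
    define e :: "nat \<Rightarrow> real \<Rightarrow> real" where "e k = (case k of 0 \<Rightarrow> (\<lambda>_. 1) | Suc j \<Rightarrow> from_nat_into D j)" for k
    have E: "\<forall>k. e k \<in> X"
    proof
      fix k show "e k \<in> X"
      proof (cases k)
        case 0 then show ?thesis unfolding e_def using ss_one[OF SS] by simp
      next
        case (Suc j) then show ?thesis unfolding e_def using from_nat_into[OF Dne, of j] DX by auto
      qed
    qed
    have Dn: "\<forall>x\<in>X. \<forall>\<epsilon>>0. \<exists>k. N (\<lambda>t. x t - e k t) < \<epsilon>"
    proof (intro ballI allI impI)
      fix x and \<epsilon> :: real assume x: "x \<in> X" and ep: "\<epsilon> > 0"
      obtain d where d: "d \<in> D" "N (\<lambda>t. x t - d t) < \<epsilon>" using Dd x ep by blast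
      obtain j where j: "from_nat_into D j = d" using from_nat_into_surj[OF Dc d(1)] by blast
      have "e (Suc j) = d" unfolding e_def using j by simp
      then show "\<exists>k. N (\<lambda>t. x t - e k t) < \<epsilon>" using d(2) by (intro exI[of _ "Suc j"]) simp
    qed
    obtain q where qadd: "\<forall>x\<in>X. \<forall>y\<in>X. q (\<lambda>t. x t + y t) = q x + q y"
      and qhom: "\<forall>x\<in>X. \<forall>c. q (\<lambda>t. c * x t) = c * q x"
      and qp: "\<forall>x\<in>X. q x \<le> p x" and qN: "\<forall>x\<in>X. \<bar>q x\<bar> \<le> N x" and qe0: "q (e 0) = p (e 0)"
    proof -
      have "\<exists>q. (\<forall>x\<in>X. \<forall>y\<in>X. q (\<lambda>t. x t + y t) = q x + q y) \<and>
             (\<forall>x\<in>X. \<forall>c. q (\<lambda>t. c * x t) = c * q x) \<and>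
             (\<forall>x\<in>X. q x \<le> p x) \<and> (\<forall>x\<in>X. \<bar>q x\<bar> \<le> N x) \<and> q (e 0) = p (e 0)"
        by (rule hb_main[OF SS P E Dn])
      then obtain q where "(\<forall>x\<in>X. \<forall>y\<in>X. q (\<lambda>t. x t + y t) = q x + q y) \<and>
             (\<forall>x\<in>X. \<forall>c. q (\<lambda>t. c * x t) = c * q x) \<and>
             (\<forall>x\<in>X. q x \<le> p x) \<and> (\<forall>x\<in>X. \<bar>q x\<bar> \<le> N x) \<and> q (e 0) = p (e 0)"
        by (rule exE)
      then show ?thesis using that by (elim conjE)
    qed
    have q1: "q (\<lambda>_. 1) = 1" using qe0 p1 unfolding e_def by simp
    have qbf: "bounded_functional X N q"
      unfolding bounded_functional_def
      using qadd qhom qN by (intro conjI exI[of _ 1]) auto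
    have qdn: "dual_norm X N q = 1" by (rule dual_norm_one[OF SS qN q1])
    have U: "\<forall>\<phi> \<psi>. bounded_functional X N \<phi> \<and> dual_norm X N \<phi> = 1 \<and> \<phi> (\<lambda>_. 1) = 1 \<and>
             bounded_functional X N \<psi> \<and> dual_norm X N \<psi> = 1 \<and> \<psi> (\<lambda>_. 1) = 1
             \<longrightarrow> (\<forall>x\<in>X. \<phi> x = \<psi> x)"
      using sm unfolding smooth_at_def by (elim conjE)
    have U2: "bounded_functional X N q \<and> dual_norm X N q = 1 \<and> q (\<lambda>_. 1) = 1 \<and>
             bounded_functional X N (integral\<^sup>L M01) \<and> dual_norm X N (integral\<^sup>L M01) = 1 \<and> integral\<^sup>L M01 (\<lambda>_. 1::real) = 1
             \<longrightarrow> (\<forall>x\<in>X. q x = integral\<^sup>L M01 x)"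
      by (rule spec[OF spec[OF U, of q], of "integral\<^sup>L M01"])
    have "\<forall>x\<in>X. q x = integral\<^sup>L M01 x"
      by (rule mp[OF U2]) (use qbf qdn q1 int_norming[OF SS] in simp)
    then have qf: "q f = integral\<^sup>L M01 f" using fX by blast
    have "q f \<le> 0" using qp fX pf by fastforce
    moreover have "q (\<lambda>t. - f t) \<le> 0" using qp ss_neg[OF SS fX] pnf by fastforce
    moreover have "q (\<lambda>t. - f t) = - q f"
    proof -
      have "q (\<lambda>t. (-1) * f t) = (-1) * q f" using qhom fX by blast
      then show ?thesis by simp
    qed
    ultimately have "q f = 0" by simp
    with qf nz show False by simp
  qed
qed

theorem proposition4:
  fixes X :: "(real \<Rightarrow> real) set" and N :: "(real \<Rightarrow> real) \<Rightarrow> real"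
  assumes "symmetric_space X N" and "separable_space X N"
  shows "(\<forall>f\<in>X. integral\<^sup>L M01 f \<noteq> 0 \<longrightarrow> (\<exists>c0::real. N (\<lambda>t. 1 - c0 * f t) < 1))
         \<longleftrightarrow> smooth_at X N (\<lambda>_. 1)"
proof
  assume "\<forall>f\<in>X. integral\<^sup>L M01 f \<noteq> 0 \<longrightarrow> (\<exists>c0::real. N (\<lambda>t. 1 - c0 * f t) < 1)"
  then show "smooth_at X N (\<lambda>_. 1)" by (rule dirAB[OF assms(1)])
next
  assume "smooth_at X N (\<lambda>_. 1)"
  then show "\<forall>f\<in>X. integral\<^sup>L M01 f \<noteq> 0 \<longrightarrow> (\<exists>c0::real. N (\<lambda>t. 1 - c0 * f t) < 1)"
    by (rule dirBA[OF assms])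
qed

end
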